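(* (a) There is a multi-valued function $F: \mathcal{C} \Rightarrow \mathcal{N}$ such that $F(x)$ is closed in $\mathcal{N}$ for every $x \in \mathcal{C}$, the graph of $F$ is a Borel subset of $\mathcal{C}\times\mathcal{N}$, and the set of points of continuity of $F$ is analytic and not Borel. (b) There is a multi-valued function $F: [0,1] \Rightarrow [0,1]$ whose graph is a Borel subset of $[0,1]\times[0,1]$ and whose set of points of continuity is analytic and not Borel.
   Context: $\mathcal{N}=\omega^\omega$ is the Baire space with the product topology (of discrete $\omega$), metrized by $d(\alpha,\beta) = 1/(\min\{n: \alpha(n)\ne\beta(n)\}+1)$ for $\alpha\neq\beta$; $\mathcal{C}=2^\omega\subseteq\mathcal{N}$ is the Cantor space with the induced metric. A multi-valued function $F: X \Rightarrow Y$ assigns to each $x$ a nonempty set $F(x)\subseteq Y$; its graph is $\{(x,y): y\in F(x)\}$. $F$ is continuous at $x$ if there is some $y \in F(x)$ such that for every $\varepsilon>0$ there is $\delta>0$ such that for every $x' \in B_p(x,\delta)$ there is $y' \in F(x')$ with $d(y,y')<\varepsilon$. A subset of a complete separable metric space is analytic if it is a continuous image of a closed subset of a complete separable metric space. *)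

theory Defs
  imports "HOL-Analysis.Analysis"
begin

text \<open>Baire space: nat \<Rightarrow> nat with the product topology (library instance on function
  spaces, nat carrying its discrete topology). Cantor space: the 0-1 valued sequences.\<close>

definition cantor_space :: "(nat \<Rightarrow> nat) set" where
  "cantor_space = {\<alpha>. \<forall>n. \<alpha> n \<in> {0, 1}}"

definition baire_dist :: "(nat \<Rightarrow> nat) \<Rightarrow> (nat \<Rightarrow> nat) \<Rightarrow> real" where
  "baire_dist \<alpha> \<beta> = (if \<alpha> = \<beta> then 0 else 1 / (real (LEAST n. \<alpha> n \<noteq> \<beta> n) + 1))"

definition multifun_on :: "'a set \<Rightarrow> 'b set \<Rightarrow> ('a \<Rightarrow> 'b set) \<Rightarrow> bool" where
  "multifun_on D Y F \<longleftrightarrow> (\<forall>x\<in>D. F x \<noteq> {} \<and> F x \<subseteq> Y)"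

definition mgraph :: "'a set \<Rightarrow> ('a \<Rightarrow> 'b set) \<Rightarrow> ('a \<times> 'b) set" where
  "mgraph D F = {(x, y). x \<in> D \<and> y \<in> F x}"

definition mcontinuous_at ::
  "('a \<Rightarrow> 'a \<Rightarrow> real) \<Rightarrow> ('b \<Rightarrow> 'b \<Rightarrow> real) \<Rightarrow> 'a set \<Rightarrow> ('a \<Rightarrow> 'b set) \<Rightarrow> 'a \<Rightarrow> bool" where
  "mcontinuous_at dX dY D F x \<longleftrightarrow>
     (\<exists>y\<in>F x. \<forall>\<epsilon>>0. \<exists>\<delta>>0. \<forall>x'\<in>D. dX x x' < \<delta> \<longrightarrow> (\<exists>y'\<in>F x'. dY y y' < \<epsilon>))"

definition mcontinuity_points ::
  "('a \<Rightarrow> 'a \<Rightarrow> real) \<Rightarrow> ('b \<Rightarrow> 'b \<Rightarrow> real) \<Rightarrow> 'a set \<Rightarrow> ('a \<Rightarrow> 'b set) \<Rightarrow> 'a set" where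
  "mcontinuity_points dX dY D F = {x \<in> D. mcontinuous_at dX dY D F x}"

text \<open>Analytic set: continuous image of a closed subset of a Polish space. The Polish space
  is taken to be the Baire space.\<close>

definition analytic_set :: "'a::topological_space set \<Rightarrow> bool" where
  "analytic_set A \<longleftrightarrow>
     (\<exists>S :: (nat \<Rightarrow> nat) set. \<exists>f. closed S \<and> continuous_on S f \<and> f ` S = A)"

end

theory Submission
  imports Defs
begin


definition cyl :: "(nat \<Rightarrow> nat) \<Rightarrow> nat \<Rightarrow> (nat \<Rightarrow> nat) set" where
  "cyl x N = {z. \<forall>i<N. z i = x i}"

lemma cyl_self[simp]: "x \<in> cyl x N" by (simp add: cyl_def)

lemma open_cyl: "open (cyl x N)"
proof -
  have "open {f::nat\<Rightarrow>nat. \<forall>i\<in>{..<N}. f (id i) \<in> {x i}}"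
    by (rule product_topology_basis') (auto intro: open_discrete)
  moreover have "{f::nat\<Rightarrow>nat. \<forall>i\<in>{..<N}. f (id i) \<in> {x i}} = cyl x N"
    by (auto simp: cyl_def)
  ultimately show ?thesis by simp
qed

lemma open_cylE:
  assumes "open U" "x \<in> U"
  shows "\<exists>N. cyl x N \<subseteq> U"
proof -
  have "openin (product_topology (\<lambda>i. euclidean) UNIV) U"
    using assms(1) by (simp add: open_fun_def)
  from product_topology_open_contains_basis[OF this assms(2)]
  obtain X where X: "x \<in> (\<Pi>\<^sub>E i\<in>UNIV. X i)" "finite {i. X i \<noteq> topspace (euclidean::nat topology)}"
     "(\<Pi>\<^sub>E i\<in>UNIV. X i) \<subseteq> U" by blast
  have fin: "finite {i. X i \<noteq> UNIV}" using X(2) by simp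
  obtain N where "{i. X i \<noteq> UNIV} \<subseteq> {..<N}" using finite_nat_bounded[OF fin] by blast
  then have N: "\<forall>i\<in>{i. X i \<noteq> UNIV}. i < N" by auto
  have "cyl x N \<subseteq> (\<Pi>\<^sub>E i\<in>UNIV. X i)"
  proof
    fix z assume z: "z \<in> cyl x N"
    show "z \<in> (\<Pi>\<^sub>E i\<in>UNIV. X i)"
    proof (simp add: PiE_iff, intro allI)
      fix i show "z i \<in> X i"
        using N z X(1) by (cases "X i = UNIV") (auto simp: cyl_def PiE_iff)
    qed
  qed
  then show ?thesis using X(3) by blast
qed

lemma open_by_cyl:
  assumes "\<And>x. x \<in> U \<Longrightarrow> \<exists>N. cyl x N \<subseteq> U"
  shows "open U"
  by (metis assms open_cyl cyl_self open_subopen)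

lemma clopen_local:
  assumes "\<And>z. \<exists>N. \<forall>z'\<in>cyl z N. (Q z' \<longleftrightarrow> Q z)"
  shows "closed {z. Q z}" "open {z. Q z}"
proof -
  show "open {z. Q z}"
    by (rule open_by_cyl) (use assms in fastforce)
  have "open {z. \<not> Q z}"
    by (rule open_by_cyl) (use assms in fastforce)
  then show "closed {z. Q z}" by (simp add: closed_def Compl_eq)
qed

lemma closed_by_cyl:
  assumes "\<And>w. w \<notin> A \<Longrightarrow> \<exists>N. cyl w N \<inter> A = {}"
  shows "closed A"
proof -
  have "open (- A)"
    by (rule open_by_cyl) (use assms in blast)
  then show ?thesis by (simp add: closed_def)
qed

lemma continuous_on_cyl:
  fixes f :: "(nat\<Rightarrow>nat) \<Rightarrow> 'b::topological_space"
  assumes "\<And>x V. x \<in> S \<Longrightarrow> open V \<Longrightarrow> f x \<in> V \<Longrightarrow> \<exists>N. \<forall>z\<in>S. z \<in> cyl x N \<longrightarrow> f z \<in> V"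
  shows "continuous_on S f"
  unfolding continuous_on_topological
  by (metis assms open_cyl cyl_self)

lemma continuous_on_cyl_metric:
  fixes f :: "(nat\<Rightarrow>nat) \<Rightarrow> 'b::metric_space"
  assumes "\<And>x e. x \<in> S \<Longrightarrow> e > 0 \<Longrightarrow> \<exists>N. \<forall>z\<in>S. z \<in> cyl x N \<longrightarrow> dist (f z) (f x) < e"
  shows "continuous_on S f"
proof (rule continuous_on_cyl)
  fix x V assume "x \<in> S" "open V" "f x \<in> V"
  then obtain e where "e > 0" "ball (f x) e \<subseteq> V" by (meson openE)
  with assms[OF \<open>x\<in>S\<close> \<open>e>0\<close>] show "\<exists>N. \<forall>z\<in>S. z \<in> cyl x N \<longrightarrow> f z \<in> V"
    by (metis dist_commute mem_ball subsetD)
qed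

lemma continuous_fun_local:
  fixes g :: "(nat\<Rightarrow>nat) \<Rightarrow> nat \<Rightarrow> nat"
  assumes "\<And>x k. \<exists>N. \<forall>z\<in>cyl x N. g z k = g x k"
  shows "continuous_on UNIV g"
proof (rule continuous_on_coordinatewise_then_product)
  fix k show "continuous_on UNIV (\<lambda>x. g x k)"
    by (rule continuous_on_cyl) (metis assms)
qed



definition pre :: "(nat \<Rightarrow> nat) \<Rightarrow> nat \<Rightarrow> nat list" where
  "pre x n = map x [0..<n]"

lemma length_pre[simp]: "length (pre x n) = n" by (simp add: pre_def)
lemma nth_pre[simp]: "i < n \<Longrightarrow> pre x n ! i = x i" by (simp add: pre_def)
lemma take_pre[simp]: "m \<le> n \<Longrightarrow> take m (pre x n) = pre x m"
  by (simp add: pre_def take_map)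
lemma pre_eq_iff: "pre x n = pre y n \<longleftrightarrow> (\<forall>i<n. x i = y i)"
  by (auto simp: pre_def)
lemma pre_Suc: "pre x (Suc n) = pre x n @ [x n]" by (simp add: pre_def)
lemma pre_shift: "pre (\<lambda>i. case i of 0 \<Rightarrow> k | Suc j \<Rightarrow> b j) (Suc n) = k # pre b n"
  by (simp add: pre_def map_upt_Suc del: upt_Suc)

definition susl :: "(nat \<Rightarrow> nat) set \<Rightarrow> bool" where
  "susl A \<longleftrightarrow> (\<exists>P. A = {x. \<exists>b. \<forall>n. P (pre x n) (pre b n)})"

lemma susl_closed:
  assumes "closed A" shows "susl A"
proof -
  let ?P = "\<lambda>xs (bs::nat list). \<exists>z\<in>A. pre z (length xs) = xs"
  have "A = {x. \<exists>b. \<forall>n. ?P (pre x n) (pre b n)}"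
  proof (intro set_eqI iffI)
    fix x assume "x \<in> A" then show "x \<in> {x. \<exists>b. \<forall>n. ?P (pre x n) (pre b n)}" by auto
  next
    fix x assume x: "x \<in> {x. \<exists>b. \<forall>n. ?P (pre x n) (pre b n)}"
    show "x \<in> A"
    proof (rule ccontr)
      assume "x \<notin> A"
      moreover have "open (- A)" using assms by (simp add: open_Compl)
      ultimately obtain N where N: "cyl x N \<subseteq> - A"
        using open_cylE[of "- A" x] by blast
      from x obtain z where "z \<in> A" "pre z N = pre x N" by auto
      then have "z \<in> cyl x N" by (auto simp: cyl_def pre_eq_iff)
      with N \<open>z\<in>A\<close> show False by auto
    qed
  qed
  then show ?thesis unfolding susl_def by (rule exI[of _ ?P])
qed

lemma susl_open:
  assumes "open A" shows "susl A"
proof -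
  let ?P = "\<lambda>xs bs. bs = [] \<or> (let t = (from_nat (hd bs) :: nat list) in
      (\<forall>z. (\<forall>i<length t. z i = t ! i) \<longrightarrow> z \<in> A) \<and> (length t \<le> length xs \<longrightarrow> take (length t) xs = t))"
  have "A = {x. \<exists>b. \<forall>n. ?P (pre x n) (pre b n)}"
  proof (intro set_eqI iffI)
    fix x assume "x \<in> A"
    then obtain N where N: "cyl x N \<subseteq> A" using open_cylE assms by blast
    let ?b = "\<lambda>_::nat. to_nat (pre x N)"
    have "?P (pre x n) (pre ?b n)" for n
    proof (cases n)
      case 0 then show ?thesis by (simp add: pre_def)
    next
      case (Suc m)
      then have "hd (pre ?b n) = to_nat (pre x N)" by (simp add: pre_def del: upt_Suc add: upt_conv_Cons)
      have "\<forall>z. (\<forall>i<N. z i = pre x N ! i) \<longrightarrow> z \<in> A"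
        using N by (auto simp: cyl_def)
      moreover have "N \<le> n \<longrightarrow> take N (pre x n) = pre x N" by simp
      ultimately show ?thesis unfolding Let_def \<open>hd (pre ?b n) = to_nat (pre x N)\<close>
        by (simp only: from_nat_to_nat length_pre) simp
    qed
    then show "x \<in> {x. \<exists>b. \<forall>n. ?P (pre x n) (pre b n)}" by blast
  next
    fix x assume "x \<in> {x. \<exists>b. \<forall>n. ?P (pre x n) (pre b n)}"
    then obtain b where b: "\<And>n. ?P (pre x n) (pre b n)" by blast
    define t where "t = (from_nat (b 0) :: nat list)"
    have "?P (pre x (Suc (length t))) (pre b (Suc (length t)))" by (rule b)
    moreover have "hd (pre b (Suc (length t))) = b 0"
      by (simp add: pre_def del: upt_Suc add: upt_conv_Cons)
    ultimately have 1: "\<forall>z. (\<forall>i<length t. z i = t ! i) \<longrightarrow> z \<in> A"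
      and 2: "take (length t) (pre x (Suc (length t))) = t"
      by (auto simp: Let_def t_def pre_def)
    have "take (length t) (pre x (Suc (length t))) = pre x (length t)" by simp
    with 2 have "pre x (length t) = t" by simp
    then have "\<forall>i<length t. x i = t ! i" by (metis nth_pre)
    with 1 show "x \<in> A" by blast
  qed
  then show ?thesis unfolding susl_def by (rule exI[of _ ?P])
qed

lemma susl_UN:
  assumes "\<And>k::nat. susl (A k)" shows "susl (\<Union>k. A k)"
proof -
  have "\<forall>k. \<exists>P. A k = {x. \<exists>b. \<forall>n. P (pre x n) (pre b n)}"
    using assms unfolding susl_def by blast
  from choice[OF this] obtain P where P0: "\<forall>k. A k = {x. \<exists>b. \<forall>n. P k (pre x n) (pre b n)}"
    by blast
  then have P: "\<And>k. A k = {x. \<exists>b. \<forall>n. P k (pre x n) (pre b n)}" by blast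
  let ?Q = "\<lambda>xs bs. case bs of [] \<Rightarrow> True | k # bs' \<Rightarrow> P k (take (length bs') xs) bs'"
  have "(\<Union>k. A k) = {x. \<exists>b. \<forall>n. ?Q (pre x n) (pre b n)}"
  proof (intro set_eqI iffI)
    fix x assume "x \<in> (\<Union>k. A k)"
    then obtain k b where kb: "\<And>n. P k (pre x n) (pre b n)" using P by blast
    let ?b = "\<lambda>i. case i of 0 \<Rightarrow> k | Suc j \<Rightarrow> b j"
    have "?Q (pre x n) (pre ?b n)" for n
    proof (cases n)
      case 0 then show ?thesis by (simp add: pre_def)
    next
      case (Suc m) then show ?thesis using kb[of m] by (simp add: pre_shift)
    qed
    then show "x \<in> {x. \<exists>b. \<forall>n. ?Q (pre x n) (pre b n)}" by blast
  next
    fix x assume "x \<in> {x. \<exists>b. \<forall>n. ?Q (pre x n) (pre b n)}"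
    then obtain b where b: "\<And>n. ?Q (pre x n) (pre b n)" by blast
    have eq: "(\<lambda>i. case i of 0 \<Rightarrow> b 0 | Suc j \<Rightarrow> (b \<circ> Suc) j) = b"
      by (auto split: nat.split)
    have "P (b 0) (pre x n) (pre (b \<circ> Suc) n)" for n
    proof -
      have "pre b (Suc n) = b 0 # pre (b \<circ> Suc) n"
        using pre_shift[of "b 0" "b \<circ> Suc" n] unfolding eq .
      moreover have "take n (pre x (Suc n)) = pre x n" by simp
      ultimately show ?thesis using b[of "Suc n"] by simp
    qed
    then show "x \<in> (\<Union>k. A k)" using P by blast
  qed
  then show ?thesis unfolding susl_def by (rule exI[of _ ?Q])
qed

lemma susl_INT:
  assumes "\<And>k::nat. susl (A k)" shows "susl (\<Inter>k. A k)"
proof -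
  have "\<forall>k. \<exists>P. A k = {x. \<exists>b. \<forall>n. P (pre x n) (pre b n)}"
    using assms unfolding susl_def by blast
  from choice[OF this] obtain P where P0: "\<forall>k. A k = {x. \<exists>b. \<forall>n. P k (pre x n) (pre b n)}"
    by blast
  then have P: "\<And>k. A k = {x. \<exists>b. \<forall>n. P k (pre x n) (pre b n)}" by blast
  let ?Q = "\<lambda>xs bs. \<forall>k m. (\<forall>i<m. prod_encode (k,i) < length bs) \<longrightarrow> m \<le> length xs \<longrightarrow>
      P k (take m xs) (map (\<lambda>i. bs ! prod_encode (k,i)) [0..<m])"
  have "(\<Inter>k. A k) = {x. \<exists>b. \<forall>n. ?Q (pre x n) (pre b n)}"
  proof (intro set_eqI iffI)
    fix x assume "x \<in> (\<Inter>k. A k)"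
    then have "\<forall>k. \<exists>b. \<forall>n. P k (pre x n) (pre b n)" using P by blast
    then obtain bb where bb: "\<And>k n. P k (pre x n) (pre (bb k) n)" by metis
    let ?b = "\<lambda>j. case prod_decode j of (k, i) \<Rightarrow> bb k i"
    have "?Q (pre x n) (pre ?b n)" for n
    proof (intro allI impI)
      fix k m assume 1: "\<forall>i<m. prod_encode (k, i) < length (pre ?b n)" and 2: "m \<le> length (pre x n)"
      have "map (\<lambda>i. pre ?b n ! prod_encode (k, i)) [0..<m] = pre (bb k) m"
        using 1 by (auto simp: pre_def)
      then show "P k (take m (pre x n)) (map (\<lambda>i. pre ?b n ! prod_encode (k, i)) [0..<m])"
        using 2 bb by simp
    qed
    then show "x \<in> {x. \<exists>b. \<forall>n. ?Q (pre x n) (pre b n)}" by blast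
  next
    fix x assume "x \<in> {x. \<exists>b. \<forall>n. ?Q (pre x n) (pre b n)}"
    then obtain b where b: "\<And>n. ?Q (pre x n) (pre b n)" by blast
    have "P k (pre x m) (pre (\<lambda>i. b (prod_encode (k,i))) m)" for k m
    proof -
      define n where "n = Suc (\<Sum>i<m. prod_encode (k,i)) + m"
      have 1: "\<forall>i<m. prod_encode (k, i) < length (pre b n)"
      proof (intro allI impI)
        fix i assume "i < m"
        then have "prod_encode (k,i) \<le> (\<Sum>i<m. prod_encode (k,i))"
          by (intro member_le_sum) auto
        then show "prod_encode (k, i) < length (pre b n)" by (simp add: n_def)
      qed
      have 2: "m \<le> length (pre x n)" by (simp add: n_def)
      have "map (\<lambda>i. pre b n ! prod_encode (k, i)) [0..<m] = pre (\<lambda>i. b (prod_encode (k,i))) m"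
        using 1 by (auto simp: pre_def)
      moreover have "take m (pre x n) = pre x m" using 2 by simp
      ultimately show ?thesis using b[of n] 1 2 by metis
    qed
    then show "x \<in> (\<Inter>k. A k)" using P by blast
  qed
  then show ?thesis unfolding susl_def by (rule exI[of _ ?Q])
qed

lemma borel_susl:
  assumes "A \<in> sets borel" shows "susl A \<and> susl (- A)"
proof -
  have "A \<in> sigma_sets UNIV (Collect open)" using assms by (simp add: sets_borel)
  then show ?thesis
  proof induction
    case (Basic a) then show ?case
      using susl_open susl_closed by (auto simp: closed_def)
  next
    case Empty
    then show ?case using susl_open susl_closed by auto
  next
    case (Compl a) then show ?case by (simp add: Compl_eq_Diff_UNIV[symmetric])
  next
    case (Union a)
    then show ?case using susl_UN[of a] susl_INT[of "\<lambda>k. - a k"] by auto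
  qed
qed

definition Dg :: "(nat \<Rightarrow> nat) set" where
  "Dg = {x. \<exists>b. \<forall>n. x (to_nat (pre x n, pre b n)) \<noteq> 0}"

lemma not_susl_compl_Dg: "\<not> susl (- Dg)"
proof
  assume "susl (- Dg)"
  then obtain P where P: "- Dg = {x. \<exists>b. \<forall>n. P (pre x n) (pre b n)}" unfolding susl_def by blast
  define u where "u = (\<lambda>k. if P (fst (from_nat k :: nat list \<times> nat list)) (snd (from_nat k :: nat list \<times> nat list)) then 1 else (0::nat))"
  have "u (to_nat (xs, bs)) \<noteq> 0 \<longleftrightarrow> P xs bs" for xs bs by (simp add: u_def)
  then have "u \<in> Dg \<longleftrightarrow> u \<in> - Dg" unfolding P by (simp add: Dg_def)
  then show False by simp
qed

lemma Dg_not_borel: "Dg \<notin> sets borel"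
  using borel_susl not_susl_compl_Dg by blast



definition Tr :: "(nat \<Rightarrow> nat) \<Rightarrow> nat list \<Rightarrow> bool" where
  "Tr y s \<longleftrightarrow> (\<forall>n. 0 < n \<longrightarrow> n \<le> length s \<longrightarrow> y (to_nat (take n s)) = 1)"

definition IFs :: "(nat \<Rightarrow> nat) \<Rightarrow> bool" where
  "IFs y \<longleftrightarrow> (\<exists>b. \<forall>n. Tr y (pre b n))"

definition stopv :: "nat list \<Rightarrow> nat \<Rightarrow> nat" where
  "stopv s = (\<lambda>i. if i < length s then s ! i + 1 else 0)"

definition fullv :: "(nat \<Rightarrow> nat) \<Rightarrow> nat \<Rightarrow> nat" where
  "fullv b = (\<lambda>i. b i + 1)"

definition leaf :: "(nat \<Rightarrow> nat) \<Rightarrow> nat list \<Rightarrow> bool" where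
  "leaf y s \<longleftrightarrow> Tr y s \<and> (\<forall>j. y (to_nat (s @ [j])) \<noteq> 1)"

definition Fa :: "(nat \<Rightarrow> nat) \<Rightarrow> (nat \<Rightarrow> nat) set" where
  "Fa y = {fullv b | b. \<forall>n. Tr y (pre b n)} \<union> {stopv s | s. leaf y s}"

lemma Tr_Nil[simp]: "Tr y []" by (simp add: Tr_def)

lemma Tr_take: "Tr y s \<Longrightarrow> Tr y (take m s)"
  by (auto simp: Tr_def min_def)

lemma Tr_snoc: "Tr y (s @ [j]) \<longleftrightarrow> Tr y s \<and> y (to_nat (s @ [j])) = 1"
proof
  assume a: "Tr y (s @ [j])"
  have "Tr y (take (length s) (s @ [j]))" by (rule Tr_take[OF a])
  then show "Tr y s \<and> y (to_nat (s @ [j])) = 1" using a by (auto simp: Tr_def)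
next
  assume a: "Tr y s \<and> y (to_nat (s @ [j])) = 1"
  show "Tr y (s @ [j])" unfolding Tr_def
  proof (intro allI impI)
    fix n assume "0 < n" "n \<le> length (s @ [j])"
    then consider "n \<le> length s" | "n = Suc (length s)" by force
    then show "y (to_nat (take n (s @ [j]))) = 1"
      by cases (use a \<open>0<n\<close> in \<open>auto simp: Tr_def\<close>)
  qed
qed

lemma stopv_zero: "stopv s i = 0 \<longleftrightarrow> length s \<le> i"
  by (auto simp: stopv_def)

lemma fullv_nz: "fullv b i \<noteq> 0" by (simp add: fullv_def)

lemma Fa_zero:
  assumes "v \<in> Fa y" "v k = 0" "\<forall>i<k. v i \<noteq> 0"
  shows "v = stopv (map (\<lambda>i. v i - 1) [0..<k]) \<and> leaf y (map (\<lambda>i. v i - 1) [0..<k])"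
proof -
  from assms(1,2) obtain s where s: "v = stopv s" "leaf y s"
    unfolding Fa_def using fullv_nz by blast
  have "\<not> length s < k"
  proof
    assume "length s < k"
    then have "v (length s) \<noteq> 0" using assms(3) by blast
    then show False using s(1) by (simp add: stopv_zero)
  qed
  moreover have "\<not> k < length s" using assms(2) s(1) by (simp add: stopv_zero)
  ultimately have "length s = k" by simp
  moreover have "s ! i = v i - 1" if "i < k" for i
    using that s(1) \<open>length s = k\<close> by (simp add: stopv_def)
  ultimately have "s = map (\<lambda>i. v i - 1) [0..<k]"
    by (intro nth_equalityI) auto
  with s show ?thesis by simp
qed

lemma ext_Fa:
  assumes "Tr y s"
  shows "\<exists>w\<in>Fa y. \<forall>i<length s. w i = s ! i + 1"
proof (cases "\<exists>r. leaf y (s @ r)")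
  case True
  then obtain r where "leaf y (s @ r)" by blast
  then have "stopv (s @ r) \<in> Fa y" by (auto simp: Fa_def)
  moreover have "\<forall>i<length s. stopv (s @ r) i = s ! i + 1"
    by (auto simp: stopv_def nth_append)
  ultimately show ?thesis by blast
next
  case False
  have step: "\<exists>j. Tr y (t @ [j])" if "Tr y t" "\<exists>r. t = s @ r" for t
  proof -
    from that(2) obtain r where "t = s @ r" by blast
    with False have "\<not> leaf y t" by blast
    with that(1) obtain j where "y (to_nat (t @ [j])) = 1" unfolding leaf_def by blast
    with that(1) show ?thesis using Tr_snoc by blast
  qed
  define R where "R = rec_nat s (\<lambda>n t. t @ [SOME j. Tr y (t @ [j])])"
  have R0: "R 0 = s" and RS: "R (Suc n) = R n @ [SOME j. Tr y (R n @ [j])]" for n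
    by (simp_all add: R_def)
  have inv: "Tr y (R n) \<and> (\<exists>r. R n = s @ r) \<and> length (R n) = length s + n" for n
  proof (induction n)
    case 0 then show ?case using assms R0 by simp
  next
    case (Suc n)
    then have "\<exists>j. Tr y (R n @ [j])" using step by blast
    then have "Tr y (R n @ [SOME j. Tr y (R n @ [j])])" by (rule someI_ex)
    with Suc show ?case by (auto simp: RS)
  qed
  have pref: "take (length (R n)) (R (n + k)) = R n" for n k
  proof (induction k)
    case 0 then show ?case by simp
  next
    case (Suc k)
    have "take (length (R n)) (R (n + Suc k)) = take (length (R n)) (R (n + k))"
      using inv[of n] inv[of "n+k"] by (simp add: RS)
    with Suc show ?case by simp
  qed
  have nthR: "R m ! i = R (Suc i) ! i" if im: "Suc i \<le> m" for i m
  proof -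
    obtain k where m: "m = Suc i + k" using le_Suc_ex[OF im] by blast
    have 1: "take (length (R (Suc i))) (R m) = R (Suc i)" unfolding m by (rule pref)
    have 2: "i < length (R (Suc i))" using inv[of "Suc i"] by linarith
    have "take (length (R (Suc i))) (R m) ! i = R m ! i" using 2 by (rule nth_take)
    then show ?thesis using 1 by simp
  qed
  define b where "b i = R (Suc i) ! i" for i
  have preb: "pre b n = take n (R n)" for n
  proof (rule nth_equalityI)
    show "length (pre b n) = length (take n (R n))" using inv[of n] by simp
    fix i assume "i < length (pre b n)"
    then have "i < n" by simp
    then show "pre b n ! i = take n (R n) ! i" using nthR[of i n] by (simp add: b_def)
  qed
  have "\<forall>n. Tr y (pre b n)" using inv Tr_take by (simp add: preb)
  then have "fullv b \<in> Fa y" by (auto simp: Fa_def)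
  moreover have "fullv b i = s ! i + 1" if "i < length s" for i
  proof -
    obtain r where "R (Suc i) = s @ r" using inv by blast
    then show ?thesis using that by (simp add: fullv_def b_def nth_append)
  qed
  ultimately show ?thesis by blast
qed

lemma Fa_nonempty: "Fa y \<noteq> {}"
  using ext_Fa[OF Tr_Nil] by blast

lemma closed_Fa: "closed (Fa y)"
proof (rule closed_by_cyl)
  fix w assume w: "w \<notin> Fa y"
  show "\<exists>N. cyl w N \<inter> Fa y = {}"
  proof (cases "\<exists>i. w i = 0")
    case True
    define i0 where "i0 = (LEAST i. w i = 0)"
    have wi0: "w i0 = 0" unfolding i0_def using True by (rule LeastI_ex)
    have nz: "\<forall>i<i0. w i \<noteq> 0" unfolding i0_def using not_less_Least by blast
    define s where "s = map (\<lambda>i. w i - 1) [0..<i0]"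
    have key: "\<And>v. v \<in> Fa y \<Longrightarrow> (\<forall>i\<le>i0. v i = w i) \<Longrightarrow> v = stopv s \<and> leaf y s"
    proof -
      fix v assume v: "v \<in> Fa y" "\<forall>i\<le>i0. v i = w i"
      have "map (\<lambda>i. v i - 1) [0..<i0] = s" using v(2) by (simp add: s_def)
      moreover have "v i0 = 0" "\<forall>i<i0. v i \<noteq> 0" using v(2) wi0 nz by auto
      ultimately show "v = stopv s \<and> leaf y s" using Fa_zero[OF v(1)] by metis
    qed
    show ?thesis
    proof (cases "\<exists>j>i0. w j \<noteq> 0")
      case True
      then obtain j where j: "j > i0" "w j \<noteq> 0" by blast
      have "cyl w (Suc j) \<inter> Fa y = {}"
      proof (rule ccontr)
        assume "cyl w (Suc j) \<inter> Fa y \<noteq> {}"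
        then obtain v where v: "v \<in> Fa y" "\<forall>i<Suc j. v i = w i" by (auto simp: cyl_def)
        then have "v = stopv s" using key j by auto
        moreover have "length s = i0" by (simp add: s_def)
        ultimately have "v j = 0" using j by (simp add: stopv_zero)
        with v j show False by auto
      qed
      then show ?thesis by blast
    next
      case False
      have "w = stopv s"
      proof
        fix i show "w i = stopv s i"
          using False nz wi0 by (cases "i < i0"; cases "i = i0") (auto simp: stopv_def s_def)
      qed
      have "cyl w (Suc i0) \<inter> Fa y = {}"
      proof (rule ccontr)
        assume "cyl w (Suc i0) \<inter> Fa y \<noteq> {}"
        then obtain v where v: "v \<in> Fa y" "\<forall>i<Suc i0. v i = w i" by (auto simp: cyl_def)
        then have "leaf y s" using key by auto
        then have "w \<in> Fa y" using \<open>w = stopv s\<close> by (auto simp: Fa_def)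
        with w show False by simp
      qed
      then show ?thesis by blast
    qed
  next
    case False
    define b where "b i = w i - 1" for i
    have wb: "w = fullv b" using False by (auto simp: fullv_def b_def)
    then obtain n where n: "\<not> Tr y (pre b n)" using w by (auto simp: Fa_def)
    have "cyl w n \<inter> Fa y = {}"
    proof (rule ccontr)
      assume "cyl w n \<inter> Fa y \<noteq> {}"
      then obtain v where v: "v \<in> Fa y" "\<forall>i<n. v i = w i" by (auto simp: cyl_def)
      from v(1) consider b' where "v = fullv b'" "\<forall>n. Tr y (pre b' n)" | s' where "v = stopv s'" "leaf y s'"
        by (auto simp: Fa_def)
      then show False
      proof cases
        case 1
        then have "pre b' n = pre b n" using v(2) wb by (auto simp: pre_eq_iff fullv_def)
        with 1 n show False by metis
      next
        case 2
        have "n \<le> length s'"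
        proof (rule ccontr)
          assume "\<not> n \<le> length s'"
          then have "v (length s') = 0" "length s' < n" using 2 by (auto simp: stopv_zero)
          then show False using v(2) wb fullv_nz by metis
        qed
        have "take n s' = pre b n"
        proof (rule nth_equalityI)
          show "length (take n s') = length (pre b n)" using \<open>n \<le> length s'\<close> by simp
          fix i assume "i < length (take n s')"
          then have "i < n" "i < length s'" by auto
          moreover have "v i = w i" using v(2) \<open>i<n\<close> by blast
          ultimately show "take n s' ! i = pre b n ! i"
            using 2(1) wb by (simp add: stopv_def fullv_def)
        qed
        moreover have "Tr y s'" using 2 by (simp add: leaf_def)
        ultimately show False using Tr_take n by metis
      qed
    qed
    then show ?thesis by blast
  qed
qed



lemma bd_le:
  assumes "\<forall>i<N. a i = b i" shows "baire_dist a b \<le> 1 / (real N + 1)"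
proof (cases "a = b")
  case True then show ?thesis by (simp add: baire_dist_def)
next
  case False
  then have ex: "\<exists>n. a n \<noteq> b n" by auto
  define L where "L = (LEAST n. a n \<noteq> b n)"
  have "a L \<noteq> b L" unfolding L_def using ex by (rule LeastI_ex)
  then have "N \<le> L" using assms by (meson not_le)
  then have "1 / (real L + 1) \<le> 1 / (real N + 1)"
    by (intro divide_left_mono) auto
  then show ?thesis using False by (simp add: baire_dist_def L_def)
qed

lemma bd_lt:
  assumes "baire_dist a b < 1 / (real N + 1)" "i \<le> N" shows "a i = b i"
proof (cases "a = b")
  case True then show ?thesis by simp
next
  case False
  define L where "L = (LEAST n. a n \<noteq> b n)"
  have "1 / (real L + 1) < 1 / (real N + 1)" using assms(1) False by (simp add: baire_dist_def L_def)
  have "N < L"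
  proof (rule ccontr)
    assume "\<not> N < L"
    then have "1 / (real N + 1) \<le> 1 / (real L + 1)" by (intro divide_left_mono) auto
    with \<open>1 / (real L + 1) < 1 / (real N + 1)\<close> show False by simp
  qed
  then have "i < L" using assms(2) by simp
  then show ?thesis unfolding L_def using not_less_Least by blast
qed

lemma ex_small: "(e::real) > 0 \<Longrightarrow> \<exists>N. 1 / (real N + 1) < e"
  using reals_Archimedean[of e] by (auto simp: inverse_eq_divide add.commute)

lemma ex_big_code: "\<exists>j. N \<le> to_nat (s @ [j::nat])"
proof (rule ccontr)
  assume "\<not> ?thesis"
  then have "range (\<lambda>j. to_nat (s @ [j::nat])) \<subseteq> {..<N}" by (auto simp: not_le)
  then have "finite (range (\<lambda>j. to_nat (s @ [j::nat])))" by (rule finite_subset) simp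
  moreover have "inj (\<lambda>j. to_nat (s @ [j::nat]))" by (rule injI) simp
  ultimately have "finite (UNIV :: nat set)" by (rule finite_imageD)
  then show False by simp
qed

lemma cont_Fa:
  assumes y: "y \<in> cantor_space"
  shows "mcontinuous_at baire_dist baire_dist cantor_space Fa y \<longleftrightarrow> IFs y"
proof
  assume "IFs y"
  then obtain b where b: "\<And>n. Tr y (pre b n)" by (auto simp: IFs_def)
  have "fullv b \<in> Fa y" using b by (auto simp: Fa_def)
  moreover have "\<exists>\<delta>>0. \<forall>y'\<in>cantor_space. baire_dist y y' < \<delta> \<longrightarrow> (\<exists>w'\<in>Fa y'. baire_dist (fullv b) w' < e)"
    if e: "e > 0" for e
  proof -
    obtain m where m: "1 / (real m + 1) < e" using ex_small[OF e] by blast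
    define M where "M = Max ((\<lambda>k. to_nat (pre b k)) ` {..m})"
    have codeM: "to_nat (pre b k) \<le> M" if "k \<le> m" for k
      unfolding M_def using that by (intro Max_ge) auto
    have "\<forall>y'\<in>cantor_space. baire_dist y y' < 1 / (real M + 1) \<longrightarrow> (\<exists>w'\<in>Fa y'. baire_dist (fullv b) w' < e)"
    proof (intro ballI impI)
      fix y' assume y': "baire_dist y y' < 1 / (real M + 1)"
      have "Tr y' (pre b m)" unfolding Tr_def
      proof (intro allI impI)
        fix n assume n: "0 < n" "n \<le> length (pre b m)"
        then have "take n (pre b m) = pre b n" by simp
        moreover have "y (to_nat (pre b n)) = y' (to_nat (pre b n))"
          using bd_lt[OF y' codeM] n by simp
        moreover have "y (to_nat (take n (pre b m))) = 1" using b[of m] n by (simp add: Tr_def)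
        ultimately show "y' (to_nat (take n (pre b m))) = 1" by simp
      qed
      from ext_Fa[OF this] obtain w' where w': "w' \<in> Fa y'" "\<forall>i<m. w' i = b i + 1" by auto
      have "baire_dist (fullv b) w' \<le> 1 / (real m + 1)"
        using w'(2) by (intro bd_le) (simp add: fullv_def)
      with m w'(1) show "\<exists>w'\<in>Fa y'. baire_dist (fullv b) w' < e" by force
    qed
    then show ?thesis by (intro exI[of _ "1 / (real M + 1)"]) auto
  qed
  ultimately show "mcontinuous_at baire_dist baire_dist cantor_space Fa y"
    unfolding mcontinuous_at_def by blast
next
  assume "mcontinuous_at baire_dist baire_dist cantor_space Fa y"
  then obtain w where w: "w \<in> Fa y"
    and wc: "\<And>e. e > 0 \<Longrightarrow> \<exists>\<delta>>0. \<forall>y'\<in>cantor_space. baire_dist y y' < \<delta> \<longrightarrow> (\<exists>w'\<in>Fa y'. baire_dist w w' < e)"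
    unfolding mcontinuous_at_def by blast
  from w consider b where "w = fullv b" "\<forall>n. Tr y (pre b n)" | s where "w = stopv s" "leaf y s"
    by (auto simp: Fa_def)
  then show "IFs y"
  proof cases
    case 1 then show ?thesis by (auto simp: IFs_def)
  next
    case 2
    obtain \<delta> where d: "\<delta> > 0" "\<forall>y'\<in>cantor_space. baire_dist y y' < \<delta> \<longrightarrow> (\<exists>w'\<in>Fa y'. baire_dist w w' < 1 / (real (length s) + 1))"
      using wc[of "1 / (real (length s) + 1)"] by auto
    obtain N where N: "1 / (real N + 1) < \<delta>" using ex_small[OF d(1)] by blast
    obtain j where j: "N \<le> to_nat (s @ [j])" using ex_big_code by blast
    define y' where "y' = y(to_nat (s @ [j]) := 1)"
    have "y' \<in> cantor_space" using y by (auto simp: cantor_space_def y'_def)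
    moreover have "baire_dist y y' < \<delta>"
    proof -
      have "\<forall>i<N. y i = y' i" using j by (auto simp: y'_def)
      then show ?thesis using bd_le N by (meson le_less_trans)
    qed
    ultimately obtain w' where w': "w' \<in> Fa y'" "baire_dist w w' < 1 / (real (length s) + 1)"
      using d(2) by blast
    have agree: "w i = w' i" if "i \<le> length s" for i using bd_lt[OF w'(2) that] .
    have "w' (length s) = 0" using agree[of "length s"] 2(1) by (simp add: stopv_def)
    moreover have "\<forall>i<length s. w' i \<noteq> 0"
    proof (intro allI impI)
      fix i assume "i < length s"
      then have "w' i = s ! i + 1" using agree[of i] 2(1) by (simp add: stopv_def)
      then show "w' i \<noteq> 0" by simp
    qed
    ultimately have "leaf y' (map (\<lambda>i. w' i - 1) [0..<length s])" using Fa_zero[OF w'(1)] by blast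
    moreover have "map (\<lambda>i. w' i - 1) [0..<length s] = s"
    proof (rule nth_equalityI)
      fix i assume "i < length (map (\<lambda>i. w' i - 1) [0..<length s])"
      then have i: "i < length s" by simp
      then have "w' i = s ! i + 1" using agree[of i] 2(1) by (simp add: stopv_def)
      then show "map (\<lambda>i. w' i - 1) [0..<length s] ! i = s ! i" using i by simp
    qed simp
    ultimately have "leaf y' s" by simp
    then have "y' (to_nat (s @ [j])) \<noteq> 1" by (simp add: leaf_def)
    then show ?thesis by (simp add: y'_def)
  qed
qed



definition ev :: "(nat \<Rightarrow> nat) \<Rightarrow> nat \<Rightarrow> nat" where "ev z = (\<lambda>i. z (2 * i))"
definition od :: "(nat \<Rightarrow> nat) \<Rightarrow> nat \<Rightarrow> nat" where "od z = (\<lambda>i. z (2 * i + 1))"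
definition ilv :: "(nat \<Rightarrow> nat) \<Rightarrow> (nat \<Rightarrow> nat) \<Rightarrow> nat \<Rightarrow> nat" where
  "ilv a b = (\<lambda>i. if even i then a (i div 2) else b (i div 2))"

lemma ev_ilv[simp]: "ev (ilv a b) = a" by (simp add: ev_def ilv_def)
lemma od_ilv[simp]: "od (ilv a b) = b" by (simp add: od_def ilv_def)

lemma cyl_ev: "z' \<in> cyl z N \<Longrightarrow> 2 * c < N \<Longrightarrow> ev z' c = ev z c"
  by (simp add: cyl_def ev_def)
lemma cyl_od: "z' \<in> cyl z N \<Longrightarrow> 2 * c + 1 < N \<Longrightarrow> od z' c = od z c"
  by (simp add: cyl_def od_def)
lemma cyl_mono: "z' \<in> cyl z N \<Longrightarrow> M \<le> N \<Longrightarrow> z' \<in> cyl z M"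
  by (simp add: cyl_def)

lemma continuous_ev: "continuous_on UNIV ev"
  unfolding ev_def by (intro continuous_on_coordinatewise_then_product continuous_on_product_coordinates)

lemma Tr_cong:
  assumes "\<forall>k. 0 < k \<longrightarrow> k \<le> length s \<longrightarrow> y (to_nat (take k s)) = y' (to_nat (take k s))"
  shows "Tr y s = Tr y' s"
  using assms by (auto simp: Tr_def)

lemma local_Tr:
  assumes L: "\<And>z. \<exists>N. \<forall>z'\<in>cyl z N. L z' = L z"
  shows "\<exists>N. \<forall>z'\<in>cyl z N. (Tr (ev z') (L z') \<longleftrightarrow> Tr (ev z) (L z))"
proof -
  obtain N1 where N1: "\<forall>z'\<in>cyl z N1. L z' = L z" using L by blast
  define M where "M = Max ((\<lambda>k. to_nat (take k (L z))) ` {..length (L z)})"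
  have cM: "to_nat (take k (L z)) \<le> M" if "k \<le> length (L z)" for k
    unfolding M_def using that by (intro Max_ge) auto
  have "\<forall>z'\<in>cyl z (N1 + Suc (2 * M)). (Tr (ev z') (L z') \<longleftrightarrow> Tr (ev z) (L z))"
  proof
    fix z' assume z': "z' \<in> cyl z (N1 + Suc (2 * M))"
    have "z' \<in> cyl z N1" by (rule cyl_mono[OF z']) simp
    then have "L z' = L z" using N1 by blast
    moreover have "Tr (ev z') (L z) = Tr (ev z) (L z)"
    proof (rule Tr_cong, intro allI impI)
      fix k assume "0 < k" "k \<le> length (L z)"
      then have "to_nat (take k (L z)) \<le> M" using cM by blast
      then have "2 * to_nat (take k (L z)) < N1 + Suc (2 * M)" by linarith
      then show "ev z' (to_nat (take k (L z))) = ev z (to_nat (take k (L z)))"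
        by (rule cyl_ev[OF z'])
    qed
    ultimately show "Tr (ev z') (L z') \<longleftrightarrow> Tr (ev z) (L z)" by simp
  qed
  then show ?thesis by blast
qed

lemma local_ev: "\<exists>N. \<forall>z'\<in>cyl z N. (Q (ev z' c) \<longleftrightarrow> Q (ev z c))"
  by (rule exI[of _ "Suc (2 * c)"]) (auto simp: cyl_ev)
lemma local_od: "\<exists>N. \<forall>z'\<in>cyl z N. (Q (od z' c) \<longleftrightarrow> Q (od z c))"
  by (rule exI[of _ "Suc (2 * c + 1)"]) (auto simp: cyl_od)

lemma local_pre_od: "\<exists>N. \<forall>z'\<in>cyl z N. pre (\<lambda>i. od z' i - k) n = pre (\<lambda>i. od z i - k) n"
proof (rule exI[of _ "2 * n + 1"], intro ballI)
  fix z' assume z': "z' \<in> cyl z (2 * n + 1)"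
  show "pre (\<lambda>i. od z' i - k) n = pre (\<lambda>i. od z i - k) n"
    unfolding pre_eq_iff using cyl_od[OF z'] by simp
qed

lemma closed_C: "closed {z. ev z \<in> cantor_space}"
proof -
  have "{z. ev z \<in> cantor_space} = (\<Inter>i. {z. ev z i \<in> {0,1}})"
    by (auto simp: cantor_space_def)
  moreover have "closed {z. ev z i \<in> {0,1}}" for i
    by (rule clopen_local(1)) (rule local_ev)
  ultimately show ?thesis by (simp add: closed_INT)
qed

subsection \<open>Analyticity\<close>

definition SA :: "(nat \<Rightarrow> nat) set" where
  "SA = {z. ev z \<in> cantor_space \<and> (\<forall>n. Tr (ev z) (pre (\<lambda>i. od z i - 0) n))}"

lemma closed_SA: "closed SA"
proof -
  have eq: "SA = {z. ev z \<in> cantor_space} \<inter> (\<Inter>n. {z. Tr (ev z) (pre (\<lambda>i. od z i - 0) n)})"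
    by (auto simp: SA_def)
  have c1: "closed {z. Tr (ev z) (pre (\<lambda>i. od z i - 0) n)}" for n
    by (rule clopen_local(1)) (rule local_Tr, rule local_pre_od)
  have c2: "closed (\<Inter>n. {z. Tr (ev z) (pre (\<lambda>i. od z i - 0) n)})"
    by (rule closed_INT) (intro ballI c1)
  show ?thesis unfolding eq by (rule closed_Int[OF closed_C c2])
qed

lemma image_SA: "ev ` SA = {y \<in> cantor_space. IFs y}"
proof (intro set_eqI iffI)
  fix y assume "y \<in> ev ` SA"
  then obtain z where "z \<in> SA" "y = ev z" by blast
  then show "y \<in> {y \<in> cantor_space. IFs y}" by (auto simp: SA_def IFs_def)
next
  fix y assume "y \<in> {y \<in> cantor_space. IFs y}"
  then obtain b where "y \<in> cantor_space" "\<And>n. Tr y (pre b n)" by (auto simp: IFs_def)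
  then have "ilv y b \<in> SA" by (simp add: SA_def)
  show "y \<in> ev ` SA"
  proof (rule image_eqI)
    show "y = ev (ilv y b)" by simp
  qed fact
qed

lemma analytic_IF: "analytic_set {y \<in> cantor_space. IFs y}"
  unfolding analytic_set_def
proof (intro exI conjI)
  show "closed SA" by (rule closed_SA)
  show "continuous_on SA ev" using continuous_ev by (rule continuous_on_subset) simp
  show "ev ` SA = {y \<in> cantor_space. IFs y}" by (rule image_SA)
qed

lemma contpts_Fa: "mcontinuity_points baire_dist baire_dist cantor_space Fa = {y \<in> cantor_space. IFs y}"
  unfolding mcontinuity_points_def using cont_Fa by auto

subsection \<open>Non-Borelness\<close>

definition Nx :: "(nat \<Rightarrow> nat) \<Rightarrow> nat list \<Rightarrow> bool" where
  "Nx x s \<longleftrightarrow> (\<forall>n\<le>length s. x (to_nat (pre x n, take n s)) \<noteq> 0)"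

definition gx :: "(nat \<Rightarrow> nat) \<Rightarrow> nat \<Rightarrow> nat" where
  "gx x = (\<lambda>k. if Nx x (from_nat k) then 1 else 0)"

lemma gx_C: "gx x \<in> cantor_space" by (simp add: gx_def cantor_space_def)

lemma Tr_gx: "Tr (gx x) s \<longleftrightarrow> (\<forall>n. 0 < n \<longrightarrow> n \<le> length s \<longrightarrow> Nx x (take n s))"
  unfolding Tr_def gx_def by auto

lemma Nx_pre: "Nx x (pre b m) \<longleftrightarrow> (\<forall>k\<le>m. x (to_nat (pre x k, pre b k)) \<noteq> 0)"
  by (simp add: Nx_def)

lemma IF_gx: "IFs (gx x) \<longleftrightarrow> x \<in> Dg"
proof
  assume "IFs (gx x)"
  then obtain b where b: "\<And>n. Tr (gx x) (pre b n)" by (auto simp: IFs_def)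
  have "x (to_nat (pre x n, pre b n)) \<noteq> 0" for n
  proof -
    have "Nx x (take (Suc n) (pre b (Suc n)))" using b[of "Suc n"] by (simp add: Tr_gx)
    then show ?thesis by (simp add: Nx_pre)
  qed
  then show "x \<in> Dg" by (auto simp: Dg_def)
next
  assume "x \<in> Dg"
  then obtain b where b: "\<And>n. x (to_nat (pre x n, pre b n)) \<noteq> 0" by (auto simp: Dg_def)
  have "Tr (gx x) (pre b n)" for n
    unfolding Tr_gx using b by (simp add: Nx_pre)
  then show "IFs (gx x)" by (auto simp: IFs_def)
qed

lemma continuous_gx: "continuous_on UNIV gx"
proof (rule continuous_fun_local)
  fix x k
  define s where "s = (from_nat k :: nat list)"
  define M where "M = Max ((\<lambda>n. to_nat (pre x n, take n s)) ` {..length s})"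
  have cM: "to_nat (pre x n, take n s) \<le> M" if "n \<le> length s" for n
    unfolding M_def using that by (intro Max_ge) auto
  have "\<forall>z\<in>cyl x (Suc (M + length s)). gx z k = gx x k"
  proof
    fix z assume z: "z \<in> cyl x (Suc (M + length s))"
    have "Nx z s = Nx x s" unfolding Nx_def
    proof (intro all_cong imp_cong refl)
      fix n assume n: "n \<le> length s"
      have "pre z n = pre x n" using z n by (auto simp: cyl_def pre_eq_iff)
      moreover have "z (to_nat (pre x n, take n s)) = x (to_nat (pre x n, take n s))"
        using z cM[OF n] by (auto simp: cyl_def)
      ultimately show "(z (to_nat (pre z n, take n s)) \<noteq> 0) = (x (to_nat (pre x n, take n s)) \<noteq> 0)"
        by simp
    qed
    then show "gx z k = gx x k" by (simp add: gx_def s_def)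
  qed
  then show "\<exists>N. \<forall>z\<in>cyl x N. gx z k = gx x k" by blast
qed

lemma IF_not_borel: "{y \<in> cantor_space. IFs y} \<notin> sets borel"
proof
  assume A: "{y \<in> cantor_space. IFs y} \<in> sets borel"
  have "gx \<in> borel_measurable borel" by (rule borel_measurable_continuous_onI[OF continuous_gx])
  from measurable_sets[OF this A] have "gx -` {y \<in> cantor_space. IFs y} \<in> sets borel" by simp
  moreover have "gx -` {y \<in> cantor_space. IFs y} = Dg" using gx_C IF_gx by auto
  ultimately show False using Dg_not_borel by simp
qed



lemma Fa_iff: "y \<in> Fa x \<longleftrightarrow> ((\<forall>i. y i \<noteq> 0) \<and> (\<forall>n. Tr x (pre (\<lambda>i. y i - 1) n))) \<or> (\<exists>s. leaf x s \<and> y = stopv s)"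
proof
  assume "y \<in> Fa x"
  then consider b where "y = fullv b" "\<forall>n. Tr x (pre b n)" | s where "y = stopv s" "leaf x s"
    by (auto simp: Fa_def)
  then show "((\<forall>i. y i \<noteq> 0) \<and> (\<forall>n. Tr x (pre (\<lambda>i. y i - 1) n))) \<or> (\<exists>s. leaf x s \<and> y = stopv s)"
  proof cases
    case 1
    then have "(\<lambda>i. y i - 1) = b" by (auto simp: fullv_def)
    with 1 show ?thesis by (auto simp: fullv_def)
  next
    case 2 then show ?thesis by blast
  qed
next
  assume "((\<forall>i. y i \<noteq> 0) \<and> (\<forall>n. Tr x (pre (\<lambda>i. y i - 1) n))) \<or> (\<exists>s. leaf x s \<and> y = stopv s)"
  then show "y \<in> Fa x"
  proof
    assume a: "(\<forall>i. y i \<noteq> 0) \<and> (\<forall>n. Tr x (pre (\<lambda>i. y i - 1) n))"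
    then have "y = fullv (\<lambda>i. y i - 1)" by (auto simp: fullv_def)
    with a show ?thesis unfolding Fa_def by blast
  next
    assume "\<exists>s. leaf x s \<and> y = stopv s"
    then show ?thesis unfolding Fa_def by blast
  qed
qed

definition Gz :: "(nat \<Rightarrow> nat) set" where
  "Gz = {z. ev z \<in> cantor_space \<and> od z \<in> Fa (ev z)}"

definition G1 :: "(nat \<Rightarrow> nat) set" where
  "G1 = (\<Inter>i. {z. od z i \<noteq> 0}) \<inter> (\<Inter>n. {z. Tr (ev z) (pre (\<lambda>i. od z i - 1) n)})"

definition G2 :: "nat list \<Rightarrow> (nat \<Rightarrow> nat) set" where
  "G2 s = {z. Tr (ev z) s} \<inter> (\<Inter>j. {z. ev z (to_nat (s @ [j])) \<noteq> 1}) \<inter> (\<Inter>i. {z. od z i = stopv s i})"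

lemma Gz_eq: "Gz = {z. ev z \<in> cantor_space} \<inter> (G1 \<union> (\<Union>s. G2 s))"
  unfolding Gz_def G1_def G2_def Fa_iff leaf_def by (auto simp: fun_eq_iff)

lemma closed_G1: "closed G1"
proof -
  have c1: "closed {z. od z i \<noteq> 0}" for i by (rule clopen_local(1)) (rule local_od)
  have c2: "closed {z. Tr (ev z) (pre (\<lambda>i. od z i - 1) n)}" for n
    by (rule clopen_local(1)) (rule local_Tr, rule local_pre_od)
  have "closed (\<Inter>i. {z. od z i \<noteq> 0})" by (rule closed_INT) (intro ballI c1)
  moreover have "closed (\<Inter>n. {z. Tr (ev z) (pre (\<lambda>i. od z i - 1) n)})" by (rule closed_INT) (intro ballI c2)
  ultimately show ?thesis unfolding G1_def by (rule closed_Int)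
qed

lemma closed_G2: "closed (G2 s)"
proof -
  have c1: "closed {z. Tr (ev z) s}"
  proof (rule clopen_local(1))
    fix z show "\<exists>N. \<forall>z'\<in>cyl z N. Tr (ev z') s = Tr (ev z) s"
      using local_Tr[of "\<lambda>_. s" z] by simp
  qed
  have c2: "closed {z. ev z (to_nat (s @ [j])) \<noteq> 1}" for j by (rule clopen_local(1)) (rule local_ev)
  have c3: "closed {z. od z i = stopv s i}" for i by (rule clopen_local(1)) (rule local_od)
  have "closed (\<Inter>j. {z. ev z (to_nat (s @ [j])) \<noteq> 1})" by (rule closed_INT) (intro ballI c2)
  moreover have "closed (\<Inter>i. {z. od z i = stopv s i})" by (rule closed_INT) (intro ballI c3)
  ultimately show ?thesis unfolding G2_def using c1 by (intro closed_Int)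
qed

lemma borel_Gz: "Gz \<in> sets borel"
proof -
  have "(\<Union>s. G2 s) \<in> sets borel"
    by (rule sets.countable_UN'') (auto intro: borel_closed closed_G2)
  moreover have "G1 \<in> sets borel" by (rule borel_closed[OF closed_G1])
  moreover have "{z. ev z \<in> cantor_space} \<in> sets borel" by (rule borel_closed[OF closed_C])
  ultimately show ?thesis unfolding Gz_eq by auto
qed

definition hh :: "(nat \<Rightarrow> nat) \<times> (nat \<Rightarrow> nat) \<Rightarrow> nat \<Rightarrow> nat" where
  "hh p = ilv (fst p) (snd p)"

lemma continuous_hh: "continuous_on UNIV hh"
proof (rule continuous_on_coordinatewise_then_product)
  fix i
  have f: "continuous_on UNIV (\<lambda>p::(nat \<Rightarrow> nat) \<times> (nat \<Rightarrow> nat). fst p j)" for j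
    by (rule continuous_on_product_then_coordinatewise) (intro continuous_intros)
  have s: "continuous_on UNIV (\<lambda>p::(nat \<Rightarrow> nat) \<times> (nat \<Rightarrow> nat). snd p j)" for j
    by (rule continuous_on_product_then_coordinatewise) (intro continuous_intros)
  show "continuous_on UNIV (\<lambda>p. hh p i)"
    by (cases "even i") (simp_all add: hh_def ilv_def f s)
qed

lemma graph_borel_a: "mgraph cantor_space Fa \<in> sets borel"
proof -
  have "hh \<in> borel_measurable borel" by (rule borel_measurable_continuous_onI[OF continuous_hh])
  from measurable_sets[OF this borel_Gz] have "hh -` Gz \<in> sets borel" by simp
  moreover have "hh -` Gz = mgraph cantor_space Fa"
    by (auto simp: Gz_def hh_def mgraph_def)
  ultimately show ?thesis by simp
qed

theorem part_a:
  "\<exists>F :: (nat \<Rightarrow> nat) \<Rightarrow> (nat \<Rightarrow> nat) set.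
            multifun_on cantor_space UNIV F
          \<and> (\<forall>x\<in>cantor_space. closed (F x))
          \<and> mgraph cantor_space F \<in> sets borel
          \<and> analytic_set (mcontinuity_points baire_dist baire_dist cantor_space F)
          \<and> mcontinuity_points baire_dist baire_dist cantor_space F \<notin> sets borel"
proof (intro exI[of _ Fa] conjI)
  show "multifun_on cantor_space UNIV Fa" by (simp add: multifun_on_def Fa_nonempty)
  show "\<forall>x\<in>cantor_space. closed (Fa x)" by (simp add: closed_Fa)
  show "mgraph cantor_space Fa \<in> sets borel" by (rule graph_borel_a)
  show "analytic_set (mcontinuity_points baire_dist baire_dist cantor_space Fa)"
    unfolding contpts_Fa by (rule analytic_IF)
  show "mcontinuity_points baire_dist baire_dist cantor_space Fa \<notin> sets borel"
    unfolding contpts_Fa by (rule IF_not_borel)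
qed



definition tm :: "(nat \<Rightarrow> nat) \<Rightarrow> nat \<Rightarrow> real" where
  "tm x i = 2 * real (min (x i) 1) / 4 ^ Suc i"

definition kap :: "(nat \<Rightarrow> nat) \<Rightarrow> real" where
  "kap x = suminf (tm x)"

definition tlk :: "nat \<Rightarrow> (nat \<Rightarrow> nat) \<Rightarrow> real" where
  "tlk n x = (\<Sum>j. tm x (j + n))"

lemma tm_nonneg: "0 \<le> tm x i" by (simp add: tm_def)
lemma tm_le: "tm x i \<le> 2 / 4 ^ Suc i" by (simp add: tm_def divide_right_mono)

lemma geo: "(\<lambda>j. 2 / 4 ^ Suc (j + n) :: real) sums (2 / (3 * 4 ^ n))"
proof -
  have "(\<lambda>j. (1/4::real) ^ j) sums (1 / (1 - 1/4))" by (rule geometric_sums) simp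
  then have 1: "(\<lambda>j. (2 / 4 ^ Suc n) * (1/4::real) ^ j) sums ((2 / 4 ^ Suc n) * (1 / (1 - 1/4)))"
    by (rule sums_mult)
  have eqf: "(\<lambda>j. (2 / 4 ^ Suc n) * (1/4::real) ^ j) = (\<lambda>j. 2 / 4 ^ Suc (j + n))"
    by (auto simp: power_add power_divide field_simps)
  have eqv: "(2 / 4 ^ Suc n) * (1 / (1 - 1/4)) = (2 / (3 * 4 ^ n) :: real)"
    by (simp add: field_simps)
  show ?thesis using 1 unfolding eqf eqv .
qed

lemma summable_tm: "summable (\<lambda>j. tm x (j + n))"
  by (rule summable_comparison_test[OF _ sums_summable[OF geo[of n]]])
     (auto intro!: exI[of _ 0] simp: tm_nonneg tm_le[of x "_ + n", simplified])

lemma summable_tm0: "summable (tm x)"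
  using summable_tm[of x 0] by simp

lemma kap_split: "kap x = tlk n x + (\<Sum>j<n. tm x j)"
  unfolding kap_def tlk_def by (rule suminf_split_initial_segment[OF summable_tm0])

lemma tlk_nonneg: "0 \<le> tlk n x"
  unfolding tlk_def by (intro suminf_nonneg summable_tm) (simp add: tm_nonneg)

lemma tlk_le: "tlk n x \<le> 2 / (3 * 4 ^ n)"
proof -
  have le: "\<And>j. tm x (j + n) \<le> 2 / 4 ^ Suc (j + n)" by (rule tm_le)
  have "tlk n x \<le> (\<Sum>j. 2 / 4 ^ Suc (j + n))"
    unfolding tlk_def by (rule suminf_le[OF le summable_tm sums_summable[OF geo]])
  then show ?thesis using sums_unique[OF geo[of n]] by simp
qed

lemma tlk_Suc: "tlk n x = tm x n + tlk (Suc n) x"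
proof -
  have "(\<Sum>j. tm x (Suc j + n)) = (\<Sum>j. tm x (j + n)) - tm x (0 + n)"
    by (rule suminf_split_head[OF summable_tm])
  then show ?thesis by (simp add: tlk_def)
qed

lemma kap_close:
  assumes "\<forall>i<n. x i = x' i" shows "\<bar>kap x - kap x'\<bar> \<le> 2 / (3 * 4 ^ n)"
proof -
  have "(\<Sum>j<n. tm x j) = (\<Sum>j<n. tm x' j)" using assms by (intro sum.cong) (auto simp: tm_def)
  then have "kap x - kap x' = tlk n x - tlk n x'" by (simp add: kap_split[of x n] kap_split[of x' n])
  then show ?thesis using tlk_nonneg[of n x] tlk_le[of n x] tlk_nonneg[of n x'] tlk_le[of n x'] by simp
qed

lemma kap_sep:
  assumes x: "x \<in> cantor_space" and x': "x' \<in> cantor_space"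
    and lt: "\<bar>kap x - kap x'\<bar> < 1 / (3 * 4 ^ N)" and i: "i \<le> N"
  shows "x i = x' i"
proof (rule ccontr)
  assume ne: "x i \<noteq> x' i"
  define L where "L = (LEAST i. x i \<noteq> x' i)"
  have xL: "x L \<noteq> x' L" unfolding L_def using ne by (rule LeastI)
  have "L \<le> i" unfolding L_def using ne by (rule Least_le)
  have same: "\<forall>j<L. x j = x' j" unfolding L_def using not_less_Least by blast
  have "(\<Sum>j<L. tm x j) = (\<Sum>j<L. tm x' j)" using same by (intro sum.cong) (auto simp: tm_def)
  then have eq: "kap x - kap x' = (tm x L - tm x' L) + (tlk (Suc L) x - tlk (Suc L) x')"
    using kap_split[of x L] kap_split[of x' L] tlk_Suc[of L x] tlk_Suc[of L x'] by linarith
  define a :: real where "a = 4 ^ L"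
  have a: "a > 0" by (simp add: a_def)
  have p4: "(4::real) ^ Suc L = 4 * a" by (simp add: a_def)
  have tmv: "tm z L = (if z L = 0 then 0 else 2 / (4 * a))" if "z \<in> cantor_space" for z
  proof -
    have "z L = 0 \<or> z L = 1" using that by (auto simp: cantor_space_def)
    then show ?thesis unfolding tm_def p4 by auto
  qed
  have "x L = 0 \<or> x L = 1" "x' L = 0 \<or> x' L = 1" using x x' by (auto simp: cantor_space_def)
  then have d1: "\<bar>tm x L - tm x' L\<bar> = 2 / (4 * a)"
    using xL tmv[OF x] tmv[OF x'] a by auto
  have d2: "\<bar>tlk (Suc L) x - tlk (Suc L) x'\<bar> \<le> 2 / (3 * (4 * a))"
  proof -
    have "tlk (Suc L) x \<le> 2 / (3 * (4 * a))" "tlk (Suc L) x' \<le> 2 / (3 * (4 * a))"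
      using tlk_le[of "Suc L" x] tlk_le[of "Suc L" x'] unfolding p4 by auto
    then show ?thesis using tlk_nonneg[of "Suc L" x] tlk_nonneg[of "Suc L" x'] by linarith
  qed
  have "\<bar>kap x - kap x'\<bar> \<ge> 2 / (4 * a) - 2 / (3 * (4 * a))" using eq d1 d2 by linarith
  also have "2 / (4 * a) - 2 / (3 * (4 * a)) = 1 / (3 * a)" using a by (simp add: field_simps)
  finally have ge: "\<bar>kap x - kap x'\<bar> \<ge> 1 / (3 * a)" .
  have "a \<le> 4 ^ N" unfolding a_def using \<open>L \<le> i\<close> i by (intro power_increasing) auto
  then have "1 / (3 * 4 ^ N) \<le> 1 / (3 * a)" using a by (intro divide_left_mono) auto
  then show False using lt ge by linarith
qed

lemma small_pow: "(e::real) > 0 \<Longrightarrow> \<exists>n. 2 / (3 * 4 ^ n) < e"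
proof -
  assume e: "e > 0"
  obtain n where n: "1 / (real n + 1) < e" using ex_small[OF e] by blast
  have "Suc n \<le> 2 ^ n" by (rule Suc_leI[OF less_exp])
  also have "(2::nat) ^ n \<le> 4 ^ n" by (rule power_mono) auto
  finally have "real (Suc n) \<le> real ((4::nat) ^ n)" by (simp only: of_nat_le_iff)
  then have "real n + 1 \<le> 4 ^ n" by simp
  then have "2 / (3 * 4 ^ n) \<le> 2 / (3 * (real n + 1))" by (intro divide_left_mono) auto
  also have "\<dots> < 1 / (real n + 1)" by (simp add: field_simps)
  finally have "2 / (3 * 4 ^ n) < 1 / (real n + 1)" .
  then show ?thesis using n by (intro exI[of _ n]) linarith
qed

lemma continuous_kap: "continuous_on UNIV kap"
proof (rule continuous_on_cyl_metric)
  fix x and e :: real assume "e > 0"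
  then obtain n where n: "2 / (3 * 4 ^ n) < e" using small_pow by blast
  have "\<forall>z\<in>UNIV. z \<in> cyl x n \<longrightarrow> dist (kap z) (kap x) < e"
  proof (intro ballI impI)
    fix z assume "z \<in> cyl x n"
    then have "\<bar>kap z - kap x\<bar> \<le> 2 / (3 * 4 ^ n)" by (intro kap_close) (simp add: cyl_def)
    then show "dist (kap z) (kap x) < e" using n by (simp add: dist_real_def)
  qed
  then show "\<exists>N. \<forall>z\<in>UNIV. z \<in> cyl x N \<longrightarrow> dist (kap z) (kap x) < e" by blast
qed

lemma kap_range: "0 \<le> kap x \<and> kap x \<le> 2 / 3"
  using kap_split[of x 0] tlk_nonneg[of 0 x] tlk_le[of 0 x] by simp



definition rho :: "real \<Rightarrow> nat \<Rightarrow> nat" where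
  "rho r = (\<lambda>i. if 1/2 \<le> frac (4 ^ i * r) then 1 else 0)"

lemma rho_C: "rho r \<in> cantor_space" by (simp add: rho_def cantor_space_def)

lemma rho_kap:
  assumes x: "x \<in> cantor_space" shows "rho (kap x) = x"
proof
  fix i
  define c where "c = min (x i) 1"
  have x01: "x i = 0 \<or> x i = 1" using x by (simp add: cantor_space_def)
  then have xi: "x i = c" "c = 0 \<or> c = 1" by (auto simp: c_def)
  define A where "A = (\<Sum>j<i. 2 * min (x j) 1 * 4 ^ (i - Suc j))"
  have "(4::real) ^ i * (\<Sum>j<i. tm x j) = (\<Sum>j<i. 4 ^ i * tm x j)" by (rule sum_distrib_left)
  also have "\<dots> = (\<Sum>j<i. real (2 * min (x j) 1 * 4 ^ (i - Suc j)))"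
  proof (rule sum.cong[OF refl])
    fix j assume "j \<in> {..<i}"
    then have e: "(i - Suc j) + Suc j = i" by simp
    have "(4::real) ^ i = 4 ^ (i - Suc j) * 4 ^ Suc j" by (metis e power_add)
    then show "4 ^ i * tm x j = real (2 * min (x j) 1 * 4 ^ (i - Suc j))"
      by (simp add: tm_def)
  qed
  also have "\<dots> = real A" by (simp add: A_def)
  finally have SA: "(4::real) ^ i * (\<Sum>j<i. tm x j) = real A" .
  have Ti: "(4::real) ^ i * tm x i = real c / 2" by (simp add: tm_def c_def)
  define T where "T = (4::real) ^ i * tlk (Suc i) x"
  have T: "0 \<le> T" "T \<le> 1 / 6"
  proof -
    show "0 \<le> T" using tlk_nonneg by (simp add: T_def)
    have "T \<le> 4 ^ i * (2 / (3 * 4 ^ Suc i))" unfolding T_def by (intro mult_left_mono[OF tlk_le]) simp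
    also have "\<dots> = 1 / 6" by (simp add: field_simps)
    finally show "T \<le> 1 / 6" .
  qed
  have "4 ^ i * kap x = real A + (real c / 2 + T)"
    using kap_split[of x i] tlk_Suc[of i x] SA Ti by (simp add: T_def algebra_simps)
  moreover have "real c / 2 + T < 1" "0 \<le> real c / 2 + T" using xi(2) T by auto
  ultimately have "frac (4 ^ i * kap x) = real c / 2 + T"
    by (simp add: frac_def floor_eq_iff)
  then show "rho (kap x) i = x i" using xi T by (auto simp: rho_def)
qed

lemma kap_inj: "x \<in> cantor_space \<Longrightarrow> x' \<in> cantor_space \<Longrightarrow> kap x = kap x' \<Longrightarrow> x = x'"
  by (metis rho_kap)

lemma borel_frac: "(\<lambda>r::real. frac r) \<in> borel_measurable borel"
proof -
  have "(\<lambda>r::real. r - real_of_int \<lfloor>r\<rfloor>) \<in> borel_measurable borel"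
    by (intro borel_measurable_diff borel_measurable_real_floor) simp
  then show ?thesis by (simp add: frac_def)
qed

lemma rho_measurable: "rho \<in> borel_measurable borel"
proof (rule measurable_coordinatewise_then_product)
  fix i
  have f: "(\<lambda>r::real. frac (4 ^ i * r)) \<in> borel_measurable borel"
    using measurable_compose[OF _ borel_frac, of "\<lambda>r. 4 ^ i * r"] by simp
  have "{r::real. 1/2 \<le> frac (4 ^ i * r)} \<in> sets borel"
    using f by measurable
  then have m: "(\<lambda>r. if r \<in> {r::real. 1/2 \<le> frac (4 ^ i * r)} then (1::nat) else 0) \<in> borel_measurable borel"
    by (intro measurable_If_set) auto
  have eq: "(\<lambda>r. rho r i) = (\<lambda>r. if r \<in> {r::real. 1/2 \<le> frac (4 ^ i * r)} then 1 else 0)"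
    by (simp add: rho_def fun_eq_iff)
  show "(\<lambda>r. rho r i) \<in> borel_measurable borel" unfolding eq by (rule m)
qed

lemma compact_C: "compact cantor_space"
proof -
  have eq: "cantor_space = PiE UNIV (\<lambda>_. {0,1::nat})"
  proof (rule set_eqI)
    fix x :: "nat \<Rightarrow> nat" show "x \<in> cantor_space \<longleftrightarrow> x \<in> PiE UNIV (\<lambda>_. {0,1::nat})"
      by (simp add: cantor_space_def PiE_iff)
  qed
  moreover have "compactin (product_topology (\<lambda>i. euclidean) UNIV) (PiE UNIV (\<lambda>_. {0,1::nat}))"
    by (subst compactin_PiE) (auto simp: compactin_euclidean_iff)
  then have "compact (PiE UNIV (\<lambda>_. {0,1::nat}))"
    by (simp add: euclidean_product_topology compactin_euclidean_iff)
  then show ?thesis by (subst eq)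
qed

definition KK :: "real set" where "KK = kap ` cantor_space"

lemma compact_KK: "compact KK"
  unfolding KK_def by (rule compact_continuous_image[OF continuous_on_subset[OF continuous_kap] compact_C]) simp

lemma closed_KK: "closed KK" using compact_KK by (rule compact_imp_closed)

lemma KK_range: "r \<in> KK \<Longrightarrow> 0 \<le> r \<and> r \<le> 2/3"
  using kap_range by (auto simp: KK_def)

lemma kap_zero: "kap (\<lambda>_. 0) = 0"
proof -
  have "tm (\<lambda>_. 0) = (\<lambda>_. 0)" by (auto simp: fun_eq_iff tm_def)
  then show ?thesis by (simp add: kap_def)
qed

lemma kap_half: "kap (\<lambda>i. if i = 0 then 1 else 0) = 1/2"
proof -
  have "tm (\<lambda>i. if i = 0 then 1 else 0) = (\<lambda>r. if r = 0 then (\<lambda>_. 1/2) r else 0)"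
    by (auto simp: tm_def fun_eq_iff)
  then have "tm (\<lambda>i. if i = 0 then 1 else 0) sums (1/2)" using sums_single[of 0 "\<lambda>_. 1/2::real"] by simp
  then show ?thesis unfolding kap_def by (rule sums_unique[symmetric])
qed

lemma zero_KK: "0 \<in> KK" unfolding KK_def using kap_zero
  by (intro image_eqI[where x="\<lambda>_. 0"]) (auto simp: cantor_space_def)
lemma half_KK: "1/2 \<in> KK" unfolding KK_def using kap_half
  by (intro image_eqI[where x="\<lambda>i. if i = 0 then 1 else 0"]) (auto simp: cantor_space_def)

lemma KK_nonempty: "KK \<noteq> {}" using zero_KK by auto

definition dK :: "real \<Rightarrow> real" where "dK r = infdist r KK"

lemma dK_pos: "r \<notin> KK \<Longrightarrow> 0 < dK r"
  unfolding dK_def using closed_KK KK_nonempty by (rule infdist_pos_not_in_closed)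

lemma dK_half: "0 \<le> r \<Longrightarrow> r \<le> 1 \<Longrightarrow> dK r \<le> 1/2"
proof -
  assume r: "0 \<le> r" "r \<le> 1"
  show ?thesis
  proof (cases "r \<le> 1/2")
    case True
    have "dK r \<le> dist r 0" unfolding dK_def using zero_KK by (rule infdist_le)
    then show ?thesis using True r by (simp add: dist_real_def)
  next
    case False
    have "dK r \<le> dist r (1/2)" unfolding dK_def using half_KK by (rule infdist_le)
    then show ?thesis using False r by (simp add: dist_real_def)
  qed
qed

lemma dK_le: "y \<in> KK \<Longrightarrow> dK r \<le> \<bar>r - y\<bar>"
  unfolding dK_def using infdist_le[of y KK r] by (simp add: dist_real_def)

lemma continuous_dK: "continuous_on UNIV dK"
  unfolding dK_def by (intro continuous_intros)

definition chi :: "(nat \<Rightarrow> nat) \<Rightarrow> nat \<Rightarrow> nat" where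
  "chi y = (\<lambda>i. if y (fst (prod_decode i)) = snd (prod_decode i) then 1 else 0)"

lemma chi_C: "chi y \<in> cantor_space" by (simp add: chi_def cantor_space_def)

lemma chi_at: "chi y (prod_encode (k, j)) = (if y k = j then 1 else 0)"
  by (simp add: chi_def)

lemma chi_agree:
  assumes "\<forall>k<M. y k = y' k" "i < M" shows "chi y i = chi y' i"
proof -
  obtain k j where kj: "prod_decode i = (k, j)" by (cases "prod_decode i")
  have "k \<le> prod_encode (k, j)" by (rule le_prod_encode_1)
  also have "prod_encode (k, j) = i" using prod_decode_inverse[of i] kj by simp
  finally have "k < M" using assms(2) by simp
  then show ?thesis using assms(1) kj by (simp add: chi_def)
qed

definition lam :: "(nat \<Rightarrow> nat) \<Rightarrow> real" where "lam y = kap (chi y)"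

lemma lam_KK: "lam y \<in> KK" unfolding lam_def KK_def using chi_C by blast



definition Fb :: "real \<Rightarrow> real set" where
  "Fb r = (if r \<in> KK then lam ` Fa (rho r)
           else if r \<in> \<rat> then {w \<in> {0..1}. sin (pi * w / dK r) \<le> -1/2}
           else {w \<in> {0..1}. 1/2 \<le> sin (pi * w / dK r)})"

lemma Fb_kap: "x \<in> cantor_space \<Longrightarrow> Fb (kap x) = lam ` Fa x"
  using rho_kap by (auto simp: Fb_def KK_def)

lemma sin_shift: "sin (2 * pi * real_of_int k + t) = sin t"
  by (simp add: sin_add)

lemma grid:
  assumes d: "0 < d" and c: "c = 1/2 \<or> c = 3/2"
  shows "\<exists>w. w0 \<le> w \<and> w \<le> w0 + 2 * d \<and> sin (pi * w / d) = sin (pi * c)"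
proof -
  define k where "k = \<lceil>(w0 / d - c) / 2\<rceil>"
  have k1: "(w0 / d - c) / 2 \<le> real_of_int k" unfolding k_def by (rule le_of_int_ceiling)
  have k2: "real_of_int k < (w0 / d - c) / 2 + 1" unfolding k_def using ceiling_correct[of "(w0 / d - c) / 2"] by linarith
  define w where "w = d * (2 * real_of_int k + c)"
  have "w0 / d \<le> 2 * real_of_int k + c" using k1 by (simp add: field_simps)
  then have "w0 \<le> w" using d by (simp add: w_def field_simps)
  moreover have "2 * real_of_int k + c < w0 / d + 2" using k2 by (simp add: field_simps)
  then have "w \<le> w0 + 2 * d" using d by (simp add: w_def field_simps)
  moreover have "pi * w / d = 2 * pi * real_of_int k + pi * c" using d by (simp add: w_def field_simps)
  then have "sin (pi * w / d) = sin (pi * c)" by (simp add: sin_shift)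
  ultimately show ?thesis by blast
qed

lemma sin_half_pi: "sin (pi * (1/2)) = 1" by simp
lemma sin_three_half_pi: "sin (pi * (3/2)) = -1"
proof -
  have "pi * (3/2) = pi + pi / 2" by simp
  then have "sin (pi * (3/2)) = sin (pi + pi / 2)" by (rule arg_cong)
  also have "\<dots> = - 1" by (simp only: sin_periodic_pi2 sin_pi_half)
  finally show ?thesis .
qed

lemma grid_neg: "0 < d \<Longrightarrow> \<exists>w. w0 \<le> w \<and> w \<le> w0 + 2 * d \<and> sin (pi * w / d) \<le> -1/2"
  using grid[of d "3/2" w0] sin_three_half_pi by auto
lemma grid_pos: "0 < d \<Longrightarrow> \<exists>w. w0 \<le> w \<and> w \<le> w0 + 2 * d \<and> 1/2 \<le> sin (pi * w / d)"
  using grid[of d "1/2" w0] sin_half_pi by auto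

lemma lam_range: "0 \<le> lam y \<and> lam y \<le> 2/3"
  using KK_range[OF lam_KK[of y]] by linarith

lemma Fb_sub: "r \<in> {0..1} \<Longrightarrow> Fb r \<subseteq> {0..1}"
proof -
  have h: "0 \<le> lam y \<and> lam y \<le> 1" for y using lam_range[of y] by linarith
  show ?thesis using h by (auto simp: Fb_def)
qed

lemma Fb_nonempty: assumes r: "r \<in> {0..1}" shows "Fb r \<noteq> {}"
proof (cases "r \<in> KK")
  case True then show ?thesis using Fa_nonempty by (simp add: Fb_def)
next
  case False
  have d: "0 < dK r" "dK r \<le> 1/2" using dK_pos[OF False] dK_half r by auto
  obtain w1 where w1: "0 \<le> w1" "w1 \<le> 2 * dK r" "sin (pi * w1 / dK r) \<le> -1/2" using grid_neg[OF d(1), of 0] by auto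
  obtain w2 where w2: "0 \<le> w2" "w2 \<le> 2 * dK r" "1/2 \<le> sin (pi * w2 / dK r)" using grid_pos[OF d(1), of 0] by auto
  show ?thesis
  proof (cases "r \<in> \<rat>")
    case True then have "w1 \<in> Fb r" using False w1 d by (simp add: Fb_def)
    then show ?thesis by blast
  next
    case f2: False then have "w2 \<in> Fb r" using False w2 d by (simp add: Fb_def)
    then show ?thesis by blast
  qed
qed

lemma irrat_between: "(a::real) < b \<Longrightarrow> \<exists>t. a < t \<and> t < b \<and> t \<notin> \<rat>"
proof (rule ccontr)
  assume ab: "a < b" and "\<not> (\<exists>t. a < t \<and> t < b \<and> t \<notin> \<rat>)"
  then have "{a<..<b} \<subseteq> \<rat>" by auto
  then have "countable {a<..<b}" using countable_rat countable_subset by blast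
  with ab show False using uncountable_open_interval by blast
qed

lemma near_other:
  assumes r: "r \<in> {0..1}" "r \<notin> KK" and e: "0 < e"
  shows "\<exists>x'. x' \<in> {0..1} \<and> \<bar>r - x'\<bar> < e \<and> x' \<notin> KK \<and> (x' \<in> \<rat> \<longleftrightarrow> r \<notin> \<rat>)"
proof -
  define \<rho> where "\<rho> = min e (dK r)"
  have rho: "0 < \<rho>" "\<rho> \<le> e" "\<rho> \<le> dK r" "\<rho> \<le> 1/2"
  proof -
    have "dK r \<le> 1/2" using r(1) by (intro dK_half) auto
    then show "0 < \<rho>" "\<rho> \<le> e" "\<rho> \<le> dK r" "\<rho> \<le> 1/2"
      using e dK_pos[OF r(2)] by (auto simp: \<rho>_def)
  qed
  obtain a b where ab: "a < b" "0 \<le> a" "b \<le> 1" "r - \<rho> \<le> a" "b \<le> r + \<rho>"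
  proof (cases "r \<le> 1/2")
    case True then show ?thesis using that[of r "r + \<rho>"] rho r(1) by auto
  next
    case False then show ?thesis using that[of "r - \<rho>" r] rho r(1) by auto
  qed
  obtain x' where x': "a < x'" "x' < b" "x' \<in> \<rat> \<longleftrightarrow> r \<notin> \<rat>"
  proof (cases "r \<in> \<rat>")
    case True then show ?thesis using irrat_between[OF ab(1)] that by blast
  next
    case False then show ?thesis using Rats_dense_in_real[OF ab(1)] that by blast
  qed
  have close: "\<bar>r - x'\<bar> < \<rho>"
  proof -
    have "\<bar>r - x'\<bar> \<le> \<rho>" using x' ab by linarith
    moreover have "x' \<noteq> r - \<rho>" "x' \<noteq> r + \<rho>" using x' ab by auto
    ultimately show ?thesis using x' ab by linarith
  qed
  have "x' \<notin> KK"
  proof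
    assume "x' \<in> KK"
    then have "dK r \<le> \<bar>r - x'\<bar>" by (rule dK_le)
    with close rho show False by linarith
  qed
  moreover have "x' \<in> {0..1}" using x' ab by auto
  ultimately show ?thesis using close rho x'(3) by (intro exI[of _ x']) auto
qed

lemma dist_pair_le: "dist (a, b) (c, d) \<le> dist a c + dist (b::real) (d::real)" for a c :: real
proof -
  have "dist (a, b) (c, d) = norm (a - c, b - d)" by (simp add: dist_norm)
  also have "\<dots> \<le> norm (a - c) + norm (b - d)" by (rule norm_Pair_le)
  finally show ?thesis by (simp add: dist_norm)
qed

lemma gap_disc:
  assumes r: "r \<in> {0..1}" "r \<notin> KK"
  shows "\<not> mcontinuous_at dist dist {0..1} Fb r"
proof
  assume "mcontinuous_at dist dist {0..1} Fb r"
  then obtain y where y: "y \<in> Fb r"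
    and yc: "\<And>e. e > 0 \<Longrightarrow> \<exists>\<delta>>0. \<forall>x'\<in>{0..1}. dist r x' < \<delta> \<longrightarrow> (\<exists>y'\<in>Fb x'. dist y y' < e)"
    unfolding mcontinuous_at_def by blast
  define \<phi> where "\<phi> = (\<lambda>p::real \<times> real. sin (pi * fst p / dK (snd p)))"
  have dpos: "dK r \<noteq> 0" using dK_pos[OF r(2)] by simp
  have "isCont dK r" using continuous_dK by (simp add: continuous_on_eq_continuous_at)
  then have "isCont (\<lambda>p::real \<times> real. dK (snd p)) (y, r)"
    by (intro continuous_at_compose[of "(y,r)" snd dK, unfolded o_def]) (auto intro: continuous_intros)
  then have cont: "isCont \<phi> (y, r)" unfolding \<phi>_def using dpos
    by (intro continuous_intros) auto
  obtain \<eta> where eta: "\<eta> > 0" "\<And>p. dist p (y, r) < \<eta> \<Longrightarrow> dist (\<phi> p) (\<phi> (y, r)) < 1/2"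
    using cont[unfolded continuous_at_eps_delta] by (meson zero_less_divide_1_iff zero_less_numeral)
  obtain \<delta> where dl: "\<delta> > 0" "\<forall>x'\<in>{0..1}. dist r x' < \<delta> \<longrightarrow> (\<exists>y'\<in>Fb x'. dist y y' < \<eta>/2)"
    using yc[of "\<eta>/2"] eta(1) by auto
  obtain x' where x': "x' \<in> {0..1}" "\<bar>r - x'\<bar> < min \<delta> (\<eta>/2)" "x' \<notin> KK" "x' \<in> \<rat> \<longleftrightarrow> r \<notin> \<rat>"
    using near_other[OF r, of "min \<delta> (\<eta>/2)"] dl(1) eta(1) by auto
  have "dist r x' < \<delta>" using x'(2) by (simp add: dist_real_def)
  then obtain y' where y': "y' \<in> Fb x'" "dist y y' < \<eta>/2" using dl(2) x'(1) by blast
  have "dist (y', x') (y, r) \<le> dist y' y + dist x' r" by (rule dist_pair_le)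
  also have "\<dots> < \<eta>" using y'(2) x'(2) by (simp add: dist_real_def abs_minus_commute)
  finally have near: "\<bar>\<phi> (y', x') - \<phi> (y, r)\<bar> < 1/2" using eta(2) by (simp add: dist_real_def)
  show False
  proof (cases "r \<in> \<rat>")
    case True
    then have "\<phi> (y, r) \<le> -1/2" using y r(2) by (simp add: Fb_def \<phi>_def)
    moreover have "1/2 \<le> \<phi> (y', x')" using y'(1) x'(3,4) True by (simp add: Fb_def \<phi>_def)
    ultimately show False using near by linarith
  next
    case False
    then have "1/2 \<le> \<phi> (y, r)" using y r(2) by (simp add: Fb_def \<phi>_def)
    moreover have "\<phi> (y', x') \<le> -1/2" using y'(1) x'(3,4) False by (simp add: Fb_def \<phi>_def)
    ultimately show False using near by linarith
  qed
qed



lemma kap_in01: "kap x \<in> {0..1}" using kap_range[of x] by auto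

lemma kap_KK: "x \<in> cantor_space \<Longrightarrow> kap x \<in> KK" by (simp add: KK_def)

lemma Fb_cont_of_Fa:
  assumes x: "x \<in> cantor_space" and c: "mcontinuous_at baire_dist baire_dist cantor_space Fa x"
  shows "mcontinuous_at dist dist {0..1} Fb (kap x)"
proof -
  from c obtain y0 where y0: "y0 \<in> Fa x"
    and yc: "\<And>e. e > 0 \<Longrightarrow> \<exists>\<delta>>0. \<forall>x'\<in>cantor_space. baire_dist x x' < \<delta> \<longrightarrow> (\<exists>y'\<in>Fa x'. baire_dist y0 y' < e)"
    unfolding mcontinuous_at_def by blast
  have w0: "lam y0 \<in> Fb (kap x)" using y0 Fb_kap[OF x] by simp
  have "\<exists>\<delta>>0. \<forall>x'\<in>{0..1}. dist (kap x) x' < \<delta> \<longrightarrow> (\<exists>w'\<in>Fb x'. dist (lam y0) w' < e)"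
    if e: "e > 0" for e
  proof -
    obtain n where n: "2 / (3 * 4 ^ n) < e" using small_pow[OF e] by blast
    obtain \<delta>b where db: "\<delta>b > 0" "\<forall>x'\<in>cantor_space. baire_dist x x' < \<delta>b \<longrightarrow> (\<exists>y'\<in>Fa x'. baire_dist y0 y' < 1 / (real n + 1))"
      using yc[of "1 / (real n + 1)"] by auto
    obtain N where N: "1 / (real N + 1) < \<delta>b" using ex_small[OF db(1)] by blast
    define \<delta> where "\<delta> = min (1 / (3 * 4 ^ N)) (min (e/2) (1/6))"
    have \<delta>: "\<delta> > 0" "\<delta> \<le> 1 / (3 * 4 ^ N)" "\<delta> \<le> e/2" "\<delta> \<le> 1/6" using e by (auto simp: \<delta>_def)
    have "\<forall>x'\<in>{0..1}. dist (kap x) x' < \<delta> \<longrightarrow> (\<exists>w'\<in>Fb x'. dist (lam y0) w' < e)"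
    proof (intro ballI impI)
      fix x' assume x'01: "x' \<in> {0..1}" and dx: "dist (kap x) x' < \<delta>"
      show "\<exists>w'\<in>Fb x'. dist (lam y0) w' < e"
      proof (cases "x' \<in> KK")
        case True
        then obtain x'' where x'': "x'' \<in> cantor_space" "x' = kap x''" by (auto simp: KK_def)
        have "\<bar>kap x - kap x''\<bar> < 1 / (3 * 4 ^ N)" using dx x'' \<delta> by (simp add: dist_real_def)
        then have ag: "x i = x'' i" if "i < Suc N" for i using kap_sep[OF x x''(1)] that by simp
        have "baire_dist x x'' \<le> 1 / (real (Suc N) + 1)" using ag by (intro bd_le) auto
        also have "\<dots> < 1 / (real N + 1)" by (simp add: divide_strict_left_mono)
        finally have "baire_dist x x'' < \<delta>b" using N by linarith
        then obtain y' where y': "y' \<in> Fa x''" "baire_dist y0 y' < 1 / (real n + 1)" using db(2) x'' by blast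
        have "\<forall>k<n. y0 k = y' k" using bd_lt[OF y'(2)] by simp
        then have "\<forall>i<n. chi y0 i = chi y' i" using chi_agree by blast
        then have "\<bar>lam y0 - lam y'\<bar> \<le> 2 / (3 * 4 ^ n)" unfolding lam_def by (rule kap_close)
        moreover have "lam y' \<in> Fb x'" using y'(1) Fb_kap[OF x''(1)] x''(2) by simp
        ultimately show ?thesis using n by (intro bexI[of _ "lam y'"]) (auto simp: dist_real_def)
      next
        case False
        define d where "d = dK x'"
        have d: "0 < d" using dK_pos[OF False] by (simp add: d_def)
        have "d \<le> \<bar>x' - kap x\<bar>" unfolding d_def by (rule dK_le[OF kap_KK[OF x]])
        then have d2: "d < \<delta>" using dx by (simp add: dist_real_def abs_minus_commute)
        have l: "0 \<le> lam y0" "lam y0 \<le> 2/3" using lam_range by auto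
        show ?thesis
        proof (cases "x' \<in> \<rat>")
          case True
          obtain w where w: "lam y0 \<le> w" "w \<le> lam y0 + 2 * d" "sin (pi * w / d) \<le> -1/2"
            using grid_neg[OF d] by blast
          have "w \<in> Fb x'" using w False True l d2 \<delta> by (simp add: Fb_def d_def)
          moreover have "dist (lam y0) w < e" using w d2 \<delta> by (simp add: dist_real_def)
          ultimately show ?thesis by blast
        next
          case f2: False
          obtain w where w: "lam y0 \<le> w" "w \<le> lam y0 + 2 * d" "1/2 \<le> sin (pi * w / d)"
            using grid_pos[OF d] by blast
          have "w \<in> Fb x'" using w False f2 l d2 \<delta> by (simp add: Fb_def d_def)
          moreover have "dist (lam y0) w < e" using w d2 \<delta> by (simp add: dist_real_def)
          ultimately show ?thesis by blast
        qed
      qed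
    qed
    then show ?thesis using \<delta>(1) by blast
  qed
  then show ?thesis unfolding mcontinuous_at_def using w0 by blast
qed

lemma Fa_cont_of_Fb:
  assumes x: "x \<in> cantor_space" and c: "mcontinuous_at dist dist {0..1} Fb (kap x)"
  shows "mcontinuous_at baire_dist baire_dist cantor_space Fa x"
proof -
  from c obtain w0 where w0: "w0 \<in> Fb (kap x)"
    and wc: "\<And>e. e > 0 \<Longrightarrow> \<exists>\<delta>>0. \<forall>x'\<in>{0..1}. dist (kap x) x' < \<delta> \<longrightarrow> (\<exists>w'\<in>Fb x'. dist w0 w' < e)"
    unfolding mcontinuous_at_def by blast
  from w0 obtain y0 where y0: "y0 \<in> Fa x" "w0 = lam y0" using Fb_kap[OF x] by auto
  have "\<exists>\<delta>>0. \<forall>x'\<in>cantor_space. baire_dist x x' < \<delta> \<longrightarrow> (\<exists>y'\<in>Fa x'. baire_dist y0 y' < e)"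
    if e: "e > 0" for e
  proof -
    obtain m where m: "1 / (real m + 1) < e" using ex_small[OF e] by blast
    define M where "M = Max ((\<lambda>k. prod_encode (k, y0 k)) ` {..m})"
    have cM: "prod_encode (k, y0 k) \<le> M" if "k \<le> m" for k
      unfolding M_def using that by (intro Max_ge) auto
    obtain \<delta>r where dr: "\<delta>r > 0" "\<forall>x'\<in>{0..1}. dist (kap x) x' < \<delta>r \<longrightarrow> (\<exists>w'\<in>Fb x'. dist w0 w' < 1 / (3 * 4 ^ M))"
      using wc[of "1 / (3 * 4 ^ M)"] by auto
    obtain n where n: "2 / (3 * 4 ^ n) < \<delta>r" using small_pow[OF dr(1)] by blast
    have "\<forall>x'\<in>cantor_space. baire_dist x x' < 1 / (real n + 1) \<longrightarrow> (\<exists>y'\<in>Fa x'. baire_dist y0 y' < e)"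
    proof (intro ballI impI)
      fix x' assume x': "x' \<in> cantor_space" and bx: "baire_dist x x' < 1 / (real n + 1)"
      have "\<forall>i<n. x i = x' i" using bd_lt[OF bx] by simp
      then have "\<bar>kap x - kap x'\<bar> \<le> 2 / (3 * 4 ^ n)" by (rule kap_close)
      then have "dist (kap x) (kap x') < \<delta>r" using n by (simp add: dist_real_def)
      then obtain w' where w': "w' \<in> Fb (kap x')" "dist w0 w' < 1 / (3 * 4 ^ M)"
        using dr(2) kap_in01 by blast
      then obtain y' where y': "y' \<in> Fa x'" "w' = lam y'" using Fb_kap[OF x'] by auto
      have "\<bar>kap (chi y0) - kap (chi y')\<bar> < 1 / (3 * 4 ^ M)"
        using w'(2) y0(2) y'(2) by (simp add: dist_real_def lam_def)
      then have cag: "chi y0 i = chi y' i" if "i \<le> M" for i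
        using kap_sep[OF chi_C chi_C] that by blast
      have ag: "y0 k = y' k" if "k < Suc m" for k
      proof -
        have "chi y0 (prod_encode (k, y0 k)) = chi y' (prod_encode (k, y0 k))"
          using cag cM that by simp
        then show ?thesis by (simp add: chi_at split: if_splits)
      qed
      have "baire_dist y0 y' \<le> 1 / (real (Suc m) + 1)" using ag by (intro bd_le) auto
      also have "\<dots> < 1 / (real m + 1)" by (simp add: divide_strict_left_mono)
      finally show "\<exists>y'\<in>Fa x'. baire_dist y0 y' < e" using y'(1) m by (intro bexI[of _ y']) auto
    qed
    then show ?thesis by (intro exI[of _ "1 / (real n + 1)"]) auto
  qed
  then show ?thesis unfolding mcontinuous_at_def using y0(1) by blast
qed

lemma contpts_Fb:
  "mcontinuity_points dist dist {0..1} Fb = kap ` {y \<in> cantor_space. IFs y}"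
proof (intro set_eqI iffI)
  fix r assume "r \<in> mcontinuity_points dist dist {0..1} Fb"
  then have r: "r \<in> {0..1}" "mcontinuous_at dist dist {0..1} Fb r" by (auto simp: mcontinuity_points_def)
  then have "r \<in> KK" using gap_disc by blast
  then obtain x where x: "x \<in> cantor_space" "r = kap x" by (auto simp: KK_def)
  then have "IFs x" using Fa_cont_of_Fb[OF x(1)] r(2) cont_Fa[OF x(1)] by simp
  then show "r \<in> kap ` {y \<in> cantor_space. IFs y}" using x by blast
next
  fix r assume "r \<in> kap ` {y \<in> cantor_space. IFs y}"
  then obtain x where x: "x \<in> cantor_space" "IFs x" "r = kap x" by blast
  then have "mcontinuous_at dist dist {0..1} Fb r" using Fb_cont_of_Fa cont_Fa by simp
  then show "r \<in> mcontinuity_points dist dist {0..1} Fb"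
    using x kap_in01 by (simp add: mcontinuity_points_def)
qed

lemma analytic_Fb: "analytic_set (kap ` {y \<in> cantor_space. IFs y})"
  unfolding analytic_set_def
proof (intro exI conjI)
  show "closed SA" by (rule closed_SA)
  show "continuous_on SA (kap \<circ> ev)"
    by (rule continuous_on_subset[OF continuous_on_compose[OF continuous_ev continuous_on_subset[OF continuous_kap]]]) auto
  show "(kap \<circ> ev) ` SA = kap ` {y \<in> cantor_space. IFs y}" by (simp only: image_comp[symmetric] image_SA)
qed

lemma not_borel_Fb: "kap ` {y \<in> cantor_space. IFs y} \<notin> sets borel"
proof
  assume A: "kap ` {y \<in> cantor_space. IFs y} \<in> sets borel"
  have "kap \<in> borel_measurable borel" by (rule borel_measurable_continuous_onI[OF continuous_kap])
  from measurable_sets[OF this A] have "kap -` (kap ` {y \<in> cantor_space. IFs y}) \<in> sets borel" by simp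
  moreover have "cantor_space \<in> sets borel" 
  proof -
    have c: "closed {z::nat\<Rightarrow>nat. z i \<in> {0,1}}" for i
      by (rule clopen_local(1)) (rule exI[of _ "Suc i"], simp add: cyl_def)
    have "cantor_space = (\<Inter>i. {z::nat\<Rightarrow>nat. z i \<in> {0,1}})" by (auto simp: cantor_space_def)
    moreover have "closed (\<Inter>i. {z::nat\<Rightarrow>nat. z i \<in> {0,1}})" by (rule closed_INT) (intro ballI c)
    ultimately show ?thesis by (simp add: borel_closed)
  qed
  ultimately have "kap -` (kap ` {y \<in> cantor_space. IFs y}) \<inter> cantor_space \<in> sets borel" by auto
  moreover have "kap -` (kap ` {y \<in> cantor_space. IFs y}) \<inter> cantor_space = {y \<in> cantor_space. IFs y}"
    using kap_inj by blast
  ultimately show False using IF_not_borel by simp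
qed



definition Gr :: "(nat \<Rightarrow> nat) set" where
  "Gr = {u. (\<forall>i. u i \<in> {0,1}) \<and> (\<forall>k. \<exists>j. u (prod_encode (k,j)) = 1 \<and> (\<forall>j'. u (prod_encode (k,j')) = 1 \<longrightarrow> j' = j))}"

definition psi :: "(nat \<Rightarrow> nat) \<Rightarrow> nat \<Rightarrow> nat" where
  "psi u = (\<lambda>k. LEAST j. u (prod_encode (k,j)) = 1)"

lemma chi_Gr: "chi y \<in> Gr"
proof -
  have "\<forall>i. chi y i \<in> {0,1}" using chi_C by (simp add: cantor_space_def)
  moreover have "\<exists>j. chi y (prod_encode (k,j)) = 1 \<and> (\<forall>j'. chi y (prod_encode (k,j')) = 1 \<longrightarrow> j' = j)" for k
    by (rule exI[of _ "y k"]) (simp add: chi_at)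
  ultimately show ?thesis unfolding Gr_def by blast
qed

lemma psi_chi: "psi (chi y) = y"
proof
  fix k show "psi (chi y) k = y k"
    unfolding psi_def by (rule Least_equality) (auto simp: chi_at split: if_splits)
qed

lemma chi_psi:
  assumes u: "u \<in> Gr" shows "chi (psi u) = u"
proof
  fix i
  obtain k j where kj: "prod_decode i = (k, j)" by (cases "prod_decode i")
  have i: "i = prod_encode (k, j)" using prod_decode_inverse[of i] kj by simp
  have ex: "\<exists>jk. u (prod_encode (k, jk)) = 1 \<and> (\<forall>j'. u (prod_encode (k,j')) = 1 \<longrightarrow> j' = jk)"
    using u by (simp add: Gr_def)
  then obtain jk where jk: "u (prod_encode (k, jk)) = 1" "\<forall>j'. u (prod_encode (k,j')) = 1 \<longrightarrow> j' = jk"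
    by (elim exE conjE)
  have p: "psi u k = jk" unfolding psi_def
  proof (rule Least_equality)
    show "u (prod_encode (k, jk)) = 1" by (rule jk(1))
    fix y assume "u (prod_encode (k, y)) = 1"
    then have "y = jk" using jk(2) by blast
    then show "jk \<le> y" by simp
  qed
  have u01: "u i \<in> {0,1}" using u by (simp add: Gr_def)
  show "chi (psi u) i = u i"
  proof (cases "j = jk")
    case True then show ?thesis using i jk(1) p by (simp add: chi_at)
  next
    case False
    then have "u (prod_encode (k, j)) \<noteq> 1" using jk(2) by metis
    then have "u i \<noteq> 1" using i by simp
    then show ?thesis using False i p u01 by (auto simp: chi_at)
  qed
qed

lemma chi_img: "u \<in> chi ` A \<longleftrightarrow> u \<in> Gr \<and> psi u \<in> A"
proof
  assume "u \<in> chi ` A" then show "u \<in> Gr \<and> psi u \<in> A" using chi_Gr psi_chi by auto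
next
  assume a: "u \<in> Gr \<and> psi u \<in> A"
  then have "u = chi (psi u)" using chi_psi by simp
  then show "u \<in> chi ` A" using a by blast
qed

definition Hz :: "(nat \<Rightarrow> nat) set" where
  "Hz = {z. ev z \<in> cantor_space \<and> od z \<in> chi ` Fa (ev z)}"

definition Psi :: "(nat \<Rightarrow> nat) \<Rightarrow> nat \<Rightarrow> nat" where
  "Psi z = ilv (ev z) (psi (od z))"

lemma Hz_eq: "Hz = {z. od z \<in> Gr} \<inter> Psi -` Gz"
  by (auto simp: Hz_def Gz_def Psi_def chi_img)

lemma borel_od: "{z. Q (od z c)} \<in> sets borel"
  by (rule borel_closed, rule clopen_local(1), rule local_od)

lemma borel_odGr: "{z. od z \<in> Gr} \<in> sets borel"
proof -
  have eq: "{z. od z \<in> Gr} = (\<Inter>i. {z. od z i \<in> {0,1}}) \<inter>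
     (\<Inter>k. \<Union>j. ({z. od z (prod_encode (k,j)) = 1} \<inter> (\<Inter>j'. {z. od z (prod_encode (k,j')) = 1 \<longrightarrow> j' = j})))"
    by (auto simp: Gr_def)
  have a: "(\<Inter>i. {z. od z i \<in> {0,1}}) \<in> sets borel"
    by (rule sets.countable_INT) (auto intro: borel_od)
  have b: "(\<Inter>j'. {z. od z (prod_encode (k,j')) = 1 \<longrightarrow> j' = j}) \<in> sets borel" for k j
    by (rule sets.countable_INT) (auto intro: borel_od)
  have c: "(\<Union>j. ({z. od z (prod_encode (k,j)) = 1} \<inter> (\<Inter>j'. {z. od z (prod_encode (k,j')) = 1 \<longrightarrow> j' = j}))) \<in> sets borel" for k
    by (rule sets.countable_UN) (auto intro!: sets.Int borel_od b)
  have d: "(\<Inter>k. \<Union>j. ({z. od z (prod_encode (k,j)) = 1} \<inter> (\<Inter>j'. {z. od z (prod_encode (k,j')) = 1 \<longrightarrow> j' = j}))) \<in> sets borel"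
  proof (rule sets.countable_INT)
    show "(\<lambda>k. \<Union>j. ({z. od z (prod_encode (k,j)) = 1} \<inter> (\<Inter>j'. {z. od z (prod_encode (k,j')) = 1 \<longrightarrow> j' = j}))) ` UNIV \<subseteq> sets borel"
      using c by (simp only: image_subset_iff) blast
  qed simp
  show ?thesis unfolding eq using a d by (rule sets.Int)
qed

lemma meas_nat_borel: "f \<in> measurable M (count_space UNIV) \<Longrightarrow> f \<in> measurable M (borel :: nat measure)"
proof -
  assume f: "f \<in> measurable M (count_space UNIV)"
  have "sets (borel :: nat measure) = sets (count_space UNIV)" by (simp add: sets_borel_eq_count_space)
  then show ?thesis using f measurable_cong_sets by blast
qed

lemma Psi_measurable: "Psi \<in> borel_measurable borel"
proof (rule measurable_coordinatewise_then_product)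
  fix i
  show "(\<lambda>z. Psi z i) \<in> borel_measurable borel"
  proof (cases "even i")
    case True
    have "(\<lambda>z::nat\<Rightarrow>nat. z (2 * (i div 2))) \<in> borel_measurable borel"
      by (rule borel_measurable_continuous_onI) (rule continuous_on_product_coordinates)
    then show ?thesis using True by (simp add: Psi_def ilv_def ev_def)
  next
    case False
    have p: "Measurable.pred borel (\<lambda>z::nat\<Rightarrow>nat. z m = 1)" for m
    proof -
      have "closed {z::nat\<Rightarrow>nat. z m = 1}"
        by (rule clopen_local(1)) (rule exI[of _ "Suc m"], simp add: cyl_def)
      then show ?thesis unfolding pred_def by (simp add: borel_closed)
    qed
    have "(\<lambda>z::nat\<Rightarrow>nat. LEAST j. z (2 * prod_encode (i div 2, j) + 1) = 1) \<in> measurable borel (count_space UNIV)"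
      by (rule measurable_Least) (rule p)
    then have "(\<lambda>z::nat\<Rightarrow>nat. LEAST j. z (2 * prod_encode (i div 2, j) + 1) = 1) \<in> borel_measurable borel"
      by (rule meas_nat_borel)
    then show ?thesis using False by (simp add: Psi_def ilv_def od_def psi_def)
  qed
qed

lemma borel_Hz: "Hz \<in> sets borel"
proof -
  from measurable_sets[OF Psi_measurable borel_Gz] have "Psi -` Gz \<in> sets borel" by simp
  then show ?thesis unfolding Hz_eq using borel_odGr by auto
qed

definition Theta :: "real \<times> real \<Rightarrow> nat \<Rightarrow> nat" where
  "Theta p = ilv (rho (fst p)) (rho (snd p))"

lemma rho_coord: "(\<lambda>r. rho r j) \<in> borel_measurable borel"
  using measurable_compose[OF rho_measurable borel_measurable_continuous_onI[OF continuous_on_product_coordinates[of j]]]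
  by simp

lemma Theta_measurable: "Theta \<in> borel_measurable borel"
proof (rule measurable_coordinatewise_then_product)
  fix i
  have f: "(fst :: real \<times> real \<Rightarrow> real) \<in> borel_measurable borel"
    by (rule borel_measurable_continuous_onI) (intro continuous_intros)
  have s: "(snd :: real \<times> real \<Rightarrow> real) \<in> borel_measurable borel"
    by (rule borel_measurable_continuous_onI) (intro continuous_intros)
  have 1: "(\<lambda>p. rho (fst p) j) \<in> borel_measurable (borel :: (real \<times> real) measure)" for j
    using measurable_compose[OF f rho_coord] by simp
  have 2: "(\<lambda>p. rho (snd p) j) \<in> borel_measurable (borel :: (real \<times> real) measure)" for j
    using measurable_compose[OF s rho_coord] by simp
  show "(\<lambda>p. Theta p i) \<in> borel_measurable borel"
    by (cases "even i") (simp_all add: Theta_def ilv_def 1 2)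
qed

definition PP1 :: "(real \<times> real) set" where
  "PP1 = {p. fst p \<in> KK} \<inter> {p. snd p \<in> KK} \<inter> Theta -` Hz"

lemma PP1_iff: "(r, w) \<in> PP1 \<longleftrightarrow> r \<in> KK \<and> w \<in> lam ` Fa (rho r)"
proof
  assume a: "(r, w) \<in> PP1"
  then have r: "r \<in> KK" and w: "w \<in> KK" and h: "rho w \<in> chi ` Fa (rho r)"
    by (auto simp: PP1_def Theta_def Hz_def)
  from w obtain u where u: "u \<in> cantor_space" "w = kap u" by (auto simp: KK_def)
  then have "rho w = u" using rho_kap by simp
  with h obtain y where y: "y \<in> Fa (rho r)" "u = chi y" by auto
  then have "w = lam y" using u by (simp add: lam_def)
  with r y show "r \<in> KK \<and> w \<in> lam ` Fa (rho r)" by blast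
next
  assume a: "r \<in> KK \<and> w \<in> lam ` Fa (rho r)"
  then obtain y where y: "y \<in> Fa (rho r)" "w = lam y" by blast
  have "rho w = chi y" using y(2) rho_kap[OF chi_C] by (simp add: lam_def)
  then show "(r, w) \<in> PP1" using a y lam_KK rho_C by (auto simp: PP1_def Theta_def Hz_def)
qed

lemma borel_KK: "KK \<in> sets borel" by (rule borel_closed[OF closed_KK])

lemma borel_PP1: "PP1 \<in> sets borel"
proof -
  have f: "(fst :: real \<times> real \<Rightarrow> real) \<in> borel_measurable borel"
    by (rule borel_measurable_continuous_onI) (intro continuous_intros)
  have s: "(snd :: real \<times> real \<Rightarrow> real) \<in> borel_measurable borel"
    by (rule borel_measurable_continuous_onI) (intro continuous_intros)
  have 1: "{p. fst p \<in> KK} \<in> sets (borel :: (real \<times> real) measure)"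
    using measurable_sets[OF f borel_KK] by (simp add: vimage_def)
  have 2: "{p. snd p \<in> KK} \<in> sets (borel :: (real \<times> real) measure)"
    using measurable_sets[OF s borel_KK] by (simp add: vimage_def)
  have 3: "Theta -` Hz \<in> sets borel" using measurable_sets[OF Theta_measurable borel_Hz] by simp
  show ?thesis unfolding PP1_def using 1 2 3 by auto
qed

lemma borel_Rats: "(\<rat> :: real set) \<in> sets borel"
  by (rule sets.countable) (auto simp: countable_rat)

lemma dK_meas[measurable]: "dK \<in> borel_measurable borel"
  by (rule borel_measurable_continuous_onI[OF continuous_dK])

definition PP2 :: "(real \<times> real) set" where
  "PP2 = {p. fst p \<in> {0..1} \<and> fst p \<notin> KK \<and> snd p \<in> {0..1} \<and>
     ((fst p \<in> \<rat> \<and> sin (pi * snd p / dK (fst p)) \<le> -1/2) \<or> (fst p \<notin> \<rat> \<and> 1/2 \<le> sin (pi * snd p / dK (fst p))))}"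

lemma borel_PP2: "PP2 \<in> sets borel"
proof -
  note [measurable] = borel_KK borel_Rats
  have "{p \<in> space (borel \<Otimes>\<^sub>M borel). fst p \<in> {0..1::real} \<and> fst p \<notin> KK \<and> snd p \<in> {0..1::real} \<and>
     ((fst p \<in> \<rat> \<and> sin (pi * snd p / dK (fst p)) \<le> -1/2) \<or> (fst p \<notin> \<rat> \<and> 1/2 \<le> sin (pi * snd p / dK (fst p))))}
     \<in> sets (borel \<Otimes>\<^sub>M borel)"
    by measurable
  moreover have "sets (borel \<Otimes>\<^sub>M borel) = sets (borel :: (real \<times> real) measure)"
    by (simp only: borel_prod)
  ultimately show ?thesis by (simp add: PP2_def space_pair_measure)
qed

lemma graph_Fb: "mgraph {0..1} Fb = PP1 \<union> PP2"
proof (intro set_eqI iffI)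
  fix p assume "p \<in> mgraph {0..1} Fb"
  then obtain r w where p: "p = (r, w)" "r \<in> {0..1}" "w \<in> Fb r" by (auto simp: mgraph_def)
  show "p \<in> PP1 \<union> PP2"
  proof (cases "r \<in> KK")
    case True then show ?thesis using p PP1_iff by (simp add: Fb_def)
  next
    case False then show ?thesis using p by (auto simp: Fb_def PP2_def split: if_splits)
  qed
next
  fix p assume "p \<in> PP1 \<union> PP2"
  then show "p \<in> mgraph {0..1} Fb"
  proof
    assume "p \<in> PP1"
    then obtain r w where rw: "p = (r, w)" "r \<in> KK" "w \<in> lam ` Fa (rho r)" using PP1_iff by (cases p) auto
    have "r \<in> {0..1}" using KK_range[OF rw(2)] by auto
    then show ?thesis using rw by (auto simp: mgraph_def Fb_def)
  next
    assume "p \<in> PP2"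
    then show ?thesis by (auto simp: mgraph_def Fb_def PP2_def)
  qed
qed

theorem part_b:
  "\<exists>F :: real \<Rightarrow> real set.
            multifun_on {0..1} {0..1} F
          \<and> mgraph {0..1} F \<in> sets borel
          \<and> analytic_set (mcontinuity_points dist dist {0..1} F)
          \<and> mcontinuity_points dist dist {0..1} F \<notin> sets borel"
proof (intro exI[of _ Fb] conjI)
  show "multifun_on {0..1} {0..1} Fb" using Fb_nonempty Fb_sub by (simp add: multifun_on_def)
  show "mgraph {0..1} Fb \<in> sets borel" unfolding graph_Fb using borel_PP1 borel_PP2 by auto
  show "analytic_set (mcontinuity_points dist dist {0..1} Fb)" unfolding contpts_Fb by (rule analytic_Fb)
  show "mcontinuity_points dist dist {0..1} Fb \<notin> sets borel" unfolding contpts_Fb by (rule not_borel_Fb)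
qed

theorem theorem2p9:
  shows "(\<exists>F :: (nat \<Rightarrow> nat) \<Rightarrow> (nat \<Rightarrow> nat) set.
            multifun_on cantor_space UNIV F
          \<and> (\<forall>x\<in>cantor_space. closed (F x))
          \<and> mgraph cantor_space F \<in> sets borel
          \<and> analytic_set (mcontinuity_points baire_dist baire_dist cantor_space F)
          \<and> mcontinuity_points baire_dist baire_dist cantor_space F \<notin> sets borel)
       \<and> (\<exists>F :: real \<Rightarrow> real set.
            multifun_on {0..1} {0..1} F
          \<and> mgraph {0..1} F \<in> sets borel
          \<and> analytic_set (mcontinuity_points dist dist {0..1} F)
          \<and> mcontinuity_points dist dist {0..1} F \<notin> sets borel)"
  using part_a part_b by blast

end
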